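(* Assume the van Kampen setup below, with compatible future retracts $Q_k:\vec\pi_1(X_k)\to\vec\pi_1(X_k,B_k)$ and compatible future retracts $P_k:\vec\pi_1(X_k,B_k)\to\vec\pi_1(X_k,A_k)$ ($k=0,1,2$), each $P_k$ being left adjoint to the inclusion $\iota_k:\vec\pi_1(X_k,A_k)\to\vec\pi_1(X_k,B_k)$. Let $P:\vec\pi_1(X,B)\to\vec\pi_1(X,A)$ be the unique functor with $P\circ j_k=j'_k\circ P_k$ ($k=1,2$). Then $P$ is left adjoint to the inclusion $\iota:\vec\pi_1(X,A)\to\vec\pi_1(X,B)$, with unit given at $x\in B$ by the image of the unit of $P_k$ at $x$ (for any $k\in\{1,2\}$ with $x\in B_k$) and counit the identity; in particular $P$ is a future retract of $\vec\pi_1(X,B)$ onto $\vec\pi_1(X,A)$.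
   Context: A d-space is a topological space with a set of continuous paths $[0,1]\to X$ (dipaths) containing all constant paths, closed under precomposition with continuous non-decreasing maps $[0,1]\to[0,1]$ and under concatenation; subsets carry the dipaths with image in them. The fundamental category $\vec\pi_1(X)$ has objects the points of $X$ and morphisms $a\to b$ the classes of dipaths from $a$ to $b$ modulo the equivalence relation generated by endpoint-fixing directed homotopies; composition is concatenation. For $A\subseteq X$, $\vec\pi_1(X,A)$ is the full subcategory on objects in $A$. For $A\subseteq B\subseteq X$ with inclusion $\iota:\vec\pi_1(X,A)\to\vec\pi_1(X,B)$, a future retract is a functor $P:\vec\pi_1(X,B)\to\vec\pi_1(X,A)$ left adjoint to $\iota$ whose unit satisfies $\eta_a=\mathrm{id}_a$ for $a\in A$. Van Kampen setup: $X$ a d-space, $X_1,X_2\subseteq X$ with $X=\mathrm{Int}(X_1)\cup\mathrm{Int}(X_2)$, dipaths of $X$ the finite concatenations of dipaths of $X_1$ and $X_2$, $X_0=X_1\cap X_2$. For $k=0,1,2$, $A_k\subseteq B_k\subseteq X_k$ with $A_0=A_1\cap A_2$, $B_0=B_1\cap B_2$, $A=A_1\cup A_2$, $B=B_1\cup B_2$, $A=\mathrm{Int}_A(A_1)\cup\mathrm{Int}_A(A_2)$, $B=\mathrm{Int}_B(B_1)\cup\mathrm{Int}_B(B_2)$. Inclusion-induced functors: $i_k:\vec\pi_1(X_0,B_0)\to\vec\pi_1(X_k,B_k)$, $j_k:\vec\pi_1(X_k,B_k)\to\vec\pi_1(X,B)$, $i'_k:\vec\pi_1(X_0,A_0)\to\vec\pi_1(X_k,A_k)$,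 $j'_k:\vec\pi_1(X_k,A_k)\to\vec\pi_1(X,A)$ ($k=1,2$). Compatible future retracts $Q_k:\vec\pi_1(X_k)\to\vec\pi_1(X_k,B_k)$: each a future retract with unit $\theta^k$, commuting with the inclusion-induced functors from index $0$ to $k=1,2$, with $\theta^0_x$ mapping to $\theta^k_x$ for $x\in X_0$. Compatible future retracts $P_k:\vec\pi_1(X_k,B_k)\to\vec\pi_1(X_k,A_k)$: each a future retract with unit $\eta^k$, $P_k\circ i_k=i'_k\circ P_0$ ($k=1,2$), and $\eta^0_x$ mapping to $\eta^k_x$ for $x\in B_0$. *)

theory Defs
  imports "HOL-Analysis.Analysis"
begin

text \<open>Concatenation of paths (same formula as joinpaths, but for arbitrary types).\<close>
definition dconcat :: "(real \<Rightarrow> 'a) \<Rightarrow> (real \<Rightarrow> 'a) \<Rightarrow> real \<Rightarrow> 'a" where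
  "dconcat p q = (\<lambda>t. if t \<le> 1/2 then p (2 * t) else q (2 * t - 1))"

text \<open>Paths are total
functions real => 'a, only their values on [0,1] matter; we therefore require D to be
saturated under agreement on [0,1] (representation convention).\<close>

definition dspace :: "'a topology \<Rightarrow> (real \<Rightarrow> 'a) set \<Rightarrow> bool" where
  "dspace X D \<longleftrightarrow>
     (\<forall>p\<in>D. continuous_map (top_of_set {0..1}) X p) \<and>
     (\<forall>x\<in>topspace X. (\<lambda>t. x) \<in> D) \<and>
     (\<forall>p\<in>D. \<forall>\<phi>. continuous_on {0..1} \<phi> \<and> \<phi> ` {0..1} \<subseteq> {0..1} \<and> mono_on {0..1} \<phi>
              \<longrightarrow> p \<circ> \<phi> \<in> D) \<and>
     (\<forall>p\<in>D. \<forall>q\<in>D. p 1 = q 0 \<longrightarrow> dconcat p q \<in> D) \<and>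
     (\<forall>p\<in>D. \<forall>q. (\<forall>t\<in>{0..1}. q t = p t) \<longrightarrow> q \<in> D)"

definition dpaths :: "(real \<Rightarrow> 'a) set \<Rightarrow> 'a set \<Rightarrow> (real \<Rightarrow> 'a) set" where
  "dpaths D S = {p \<in> D. p ` {0..1} \<subseteq> S}"

text \<open>Endpoint-fixing directed homotopy in the subspace S from p to q: a d-map
  from the directed square (dipaths = pairs of nondecreasing continuous reparametrisations)
  to S.\<close>
definition dhtp :: "'a topology \<Rightarrow> (real \<Rightarrow> 'a) set \<Rightarrow> 'a set
                     \<Rightarrow> (real \<Rightarrow> 'a) \<Rightarrow> (real \<Rightarrow> 'a) \<Rightarrow> bool" where
  "dhtp X D S p q \<longleftrightarrow> (\<exists>H :: real \<times> real \<Rightarrow> 'a.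
     continuous_map (top_of_set ({0..1} \<times> {0..1})) (subtopology X S) H \<and>
     (\<forall>a b. continuous_on {0..1} a \<and> a ` {0..1} \<subseteq> {0..1} \<and> mono_on {0..1} a \<and>
            continuous_on {0..1} b \<and> b ` {0..1} \<subseteq> {0..1} \<and> mono_on {0..1} b
            \<longrightarrow> (\<lambda>t. H (a t, b t)) \<in> dpaths D S) \<and>
     (\<forall>t\<in>{0..1}. H (t, 0) = p t \<and> H (t, 1) = q t) \<and>
     (\<forall>s\<in>{0..1}. H (0, s) = p 0 \<and> H (1, s) = p 1))"

definition dequiv :: "'a topology \<Rightarrow> (real \<Rightarrow> 'a) set \<Rightarrow> 'a set
                       \<Rightarrow> (real \<Rightarrow> 'a) \<Rightarrow> (real \<Rightarrow> 'a) \<Rightarrow> bool" where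
  "dequiv X D S = (\<lambda>p q. dhtp X D S p q \<or> dhtp X D S q p)\<^sup>*\<^sup>*"

definition dcls :: "'a topology \<Rightarrow> (real \<Rightarrow> 'a) set \<Rightarrow> 'a set
                     \<Rightarrow> (real \<Rightarrow> 'a) \<Rightarrow> (real \<Rightarrow> 'a) set" where
  "dcls X D S p = {q \<in> dpaths D S. dequiv X D S p q}"

definition dhom :: "'a topology \<Rightarrow> (real \<Rightarrow> 'a) set \<Rightarrow> 'a set \<Rightarrow> 'a \<Rightarrow> 'a
                     \<Rightarrow> (real \<Rightarrow> 'a) set set" where
  "dhom X D S a b = {dcls X D S p | p. p \<in> dpaths D S \<and> p 0 = a \<and> p 1 = b}"

definition did :: "'a topology \<Rightarrow> (real \<Rightarrow> 'a) set \<Rightarrow> 'a set \<Rightarrow> 'a \<Rightarrow> (real \<Rightarrow> 'a) set" where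
  "did X D S a = dcls X D S (\<lambda>t. a)"

text \<open>Composition g o f (first f, then g) is concatenation of representatives.\<close>
definition dcomp :: "'a topology \<Rightarrow> (real \<Rightarrow> 'a) set \<Rightarrow> 'a set
                      \<Rightarrow> (real \<Rightarrow> 'a) set \<Rightarrow> (real \<Rightarrow> 'a) set \<Rightarrow> (real \<Rightarrow> 'a) set" where
  "dcomp X D S g f = dcls X D S (dconcat (SOME p. p \<in> f) (SOME q. q \<in> g))"

text \<open>Morphism map of the functor induced by an inclusion of subspaces S \<subseteq> S':
  a class in S goes to the class in S' containing it (objects are mapped identically).\<close>
definition dincl :: "'a topology \<Rightarrow> (real \<Rightarrow> 'a) set \<Rightarrow> 'a set
                      \<Rightarrow> (real \<Rightarrow> 'a) set \<Rightarrow> (real \<Rightarrow> 'a) set" where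
  "dincl X D S' f = {q \<in> dpaths D S'. \<exists>p\<in>f. dequiv X D S' p q}"

text \<open>(Fo, Fm) is a functor from the full subcategory on objects B1 of the fundamental
  category of S1 to the full subcategory on objects B2 of the fundamental category of S2.\<close>
definition dfunctor :: "'a topology \<Rightarrow> (real \<Rightarrow> 'a) set \<Rightarrow> 'a set \<Rightarrow> 'a set \<Rightarrow> 'a set \<Rightarrow> 'a set
     \<Rightarrow> ('a \<Rightarrow> 'a) \<Rightarrow> ((real \<Rightarrow> 'a) set \<Rightarrow> (real \<Rightarrow> 'a) set) \<Rightarrow> bool" where
  "dfunctor X D S1 B1 S2 B2 Fo Fm \<longleftrightarrow>
     (\<forall>a\<in>B1. Fo a \<in> B2) \<and>
     (\<forall>a\<in>B1. \<forall>b\<in>B1. \<forall>f\<in>dhom X D S1 a b. Fm f \<in> dhom X D S2 (Fo a) (Fo b)) \<and>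
     (\<forall>a\<in>B1. Fm (did X D S1 a) = did X D S2 (Fo a)) \<and>
     (\<forall>a\<in>B1. \<forall>b\<in>B1. \<forall>c\<in>B1. \<forall>f\<in>dhom X D S1 a b. \<forall>g\<in>dhom X D S1 b c.
        Fm (dcomp X D S1 g f) = dcomp X D S2 (Fm g) (Fm f))"

text \<open>(Fo, Fm) : pi1(S,B) \<rightarrow> pi1(S,A) is left adjoint to the inclusion
  pi1(S,A) \<rightarrow> pi1(S,B), with unit \<eta> (natural, and universal arrows).\<close>
definition left_adjoint_incl :: "'a topology \<Rightarrow> (real \<Rightarrow> 'a) set \<Rightarrow> 'a set \<Rightarrow> 'a set \<Rightarrow> 'a set
     \<Rightarrow> ('a \<Rightarrow> 'a) \<Rightarrow> ((real \<Rightarrow> 'a) set \<Rightarrow> (real \<Rightarrow> 'a) set) \<Rightarrow> ('a \<Rightarrow> (real \<Rightarrow> 'a) set) \<Rightarrow> bool" where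
  "left_adjoint_incl X D S B A Fo Fm \<eta> \<longleftrightarrow>
     dfunctor X D S B S A Fo Fm \<and>
     (\<forall>x\<in>B. \<eta> x \<in> dhom X D S x (Fo x)) \<and>
     (\<forall>x\<in>B. \<forall>y\<in>B. \<forall>f\<in>dhom X D S x y.
        dcomp X D S (Fm f) (\<eta> x) = dcomp X D S (\<eta> y) f) \<and>
     (\<forall>x\<in>B. \<forall>a\<in>A. \<forall>f\<in>dhom X D S x a.
        \<exists>!g. g \<in> dhom X D S (Fo x) a \<and> dcomp X D S g (\<eta> x) = f)"

definition adj_counit :: "'a topology \<Rightarrow> (real \<Rightarrow> 'a) set \<Rightarrow> 'a set
     \<Rightarrow> ('a \<Rightarrow> 'a) \<Rightarrow> ('a \<Rightarrow> (real \<Rightarrow> 'a) set) \<Rightarrow> 'a \<Rightarrow> (real \<Rightarrow> 'a) set" where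
  "adj_counit X D S Fo \<eta> a =
     (THE g. g \<in> dhom X D S (Fo a) a \<and> dcomp X D S g (\<eta> a) = did X D S a)"

definition future_retract :: "'a topology \<Rightarrow> (real \<Rightarrow> 'a) set \<Rightarrow> 'a set \<Rightarrow> 'a set \<Rightarrow> 'a set
     \<Rightarrow> ('a \<Rightarrow> 'a) \<Rightarrow> ((real \<Rightarrow> 'a) set \<Rightarrow> (real \<Rightarrow> 'a) set) \<Rightarrow> ('a \<Rightarrow> (real \<Rightarrow> 'a) set) \<Rightarrow> bool" where
  "future_retract X D S B A Fo Fm \<eta> \<longleftrightarrow>
     left_adjoint_incl X D S B A Fo Fm \<eta> \<and> (\<forall>a\<in>A. \<eta> a = did X D S a)"

end

theory Submission
  imports Defs
begin

definition adm :: "(real \<Rightarrow> real) \<Rightarrow> bool" where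
  "adm \<phi> \<longleftrightarrow> continuous_on {0..1} \<phi> \<and> \<phi> ` {0..1} \<subseteq> {0..1} \<and> mono_on {0..1} \<phi>"

lemma admI:
  assumes "continuous_on {0..1} \<phi>" "\<And>t. t \<in> {0..1} \<Longrightarrow> \<phi> t \<in> {0..1}"
    "\<And>s t. 0 \<le> s \<Longrightarrow> s \<le> t \<Longrightarrow> t \<le> 1 \<Longrightarrow> \<phi> s \<le> \<phi> t"
  shows "adm \<phi>"
  using assms unfolding adm_def by (auto intro!: mono_onI)

lemma adm_range: "adm \<phi> \<Longrightarrow> 0 \<le> t \<Longrightarrow> t \<le> 1 \<Longrightarrow> 0 \<le> \<phi> t \<and> \<phi> t \<le> 1"
  unfolding adm_def by (force simp: image_subset_iff)

lemma adm_mono: "adm \<phi> \<Longrightarrow> 0 \<le> s \<Longrightarrow> s \<le> t \<Longrightarrow> t \<le> 1 \<Longrightarrow> \<phi> s \<le> \<phi> t"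
  unfolding adm_def using mono_onD[of "{0..1}" \<phi> s t] by auto

lemma adm_cont: "adm \<phi> \<Longrightarrow> continuous_on {0..1} \<phi>"
  unfolding adm_def by auto

lemma adm_id: "adm (\<lambda>t. t)" by (rule admI) auto

lemma adm_const: "c \<in> {0..1} \<Longrightarrow> adm (\<lambda>t. c)" by (rule admI) auto

lemma adm_comp: "adm \<phi> \<Longrightarrow> adm \<psi> \<Longrightarrow> adm (\<lambda>t. \<phi> (\<psi> t))"
proof (rule admI)
  assume a: "adm \<phi>" "adm \<psi>"
  show "continuous_on {0..1} (\<lambda>t. \<phi> (\<psi> t))"
    using a unfolding adm_def by (intro continuous_on_compose2[of "{0..1}" \<phi> "{0..1}" \<psi>]) auto
  show "\<phi> (\<psi> t) \<in> {0..1}" if "t \<in> {0..1}" for t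
    using adm_range[OF a(2), of t] adm_range[OF a(1), of "\<psi> t"] that by auto
  show "\<phi> (\<psi> s) \<le> \<phi> (\<psi> t)" if "0 \<le> s" "s \<le> t" "t \<le> 1" for s t
    using adm_mono[OF a(2), of s t] adm_range[OF a(2), of s] adm_range[OF a(2), of t]
      adm_mono[OF a(1), of "\<psi> s" "\<psi> t"] that by auto
qed

locale DS =
  fixes X :: "'a topology" and D :: "(real \<Rightarrow> 'a) set"
  assumes dsp: "dspace X D"
begin

lemma D_cont: "p \<in> D \<Longrightarrow> continuous_map (top_of_set {0..1}) X p"
  using dsp unfolding dspace_def by auto

lemma D_const: "x \<in> topspace X \<Longrightarrow> (\<lambda>t. x) \<in> D"
  using dsp unfolding dspace_def by auto

lemma D_reparam: "p \<in> D \<Longrightarrow> adm \<phi> \<Longrightarrow> (\<lambda>t. p (\<phi> t)) \<in> D"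
  using dsp unfolding dspace_def adm_def by (auto simp: o_def)

lemma D_concat: "p \<in> D \<Longrightarrow> q \<in> D \<Longrightarrow> p 1 = q 0 \<Longrightarrow> dconcat p q \<in> D"
  using dsp unfolding dspace_def by auto

lemma D_agree: "p \<in> D \<Longrightarrow> (\<And>t. t \<in> {0..1} \<Longrightarrow> q t = p t) \<Longrightarrow> q \<in> D"
  using dsp unfolding dspace_def by auto

lemma D_img: "p \<in> D \<Longrightarrow> t \<in> {0..1} \<Longrightarrow> p t \<in> topspace X"
  using continuous_map_image_subset_topspace[OF D_cont[of p]] by auto

lemma dp_reparam: "p \<in> dpaths D S \<Longrightarrow> adm \<phi> \<Longrightarrow> (\<lambda>t. p (\<phi> t)) \<in> dpaths D S"
proof -
  assume p: "p \<in> dpaths D S" and a: "adm \<phi>"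
  have "(\<lambda>t. p (\<phi> t)) \<in> D" using D_reparam p a unfolding dpaths_def by blast
  moreover have "p (\<phi> t) \<in> S" if "t \<in> {0..1}" for t
    using p adm_range[OF a, of t] that unfolding dpaths_def by auto
  ultimately show ?thesis unfolding dpaths_def by auto
qed

lemma dp_agree: "p \<in> dpaths D S \<Longrightarrow> (\<And>t. t \<in> {0..1} \<Longrightarrow> q t = p t) \<Longrightarrow> q \<in> dpaths D S"
  unfolding dpaths_def using D_agree by (auto simp: image_subset_iff)

lemma dp_const: "x \<in> topspace X \<Longrightarrow> x \<in> S \<Longrightarrow> (\<lambda>t. x) \<in> dpaths D S"
  unfolding dpaths_def using D_const by auto

lemma dp_concat: "p \<in> dpaths D S \<Longrightarrow> q \<in> dpaths D S \<Longrightarrow> p 1 = q 0 \<Longrightarrow> dconcat p q \<in> dpaths D S"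
  unfolding dpaths_def using D_concat by (auto simp: dconcat_def image_subset_iff)

lemma dp_mono: "p \<in> dpaths D S \<Longrightarrow> S \<subseteq> S' \<Longrightarrow> p \<in> dpaths D S'"
  unfolding dpaths_def by auto

lemma dp_pt: "p \<in> dpaths D S \<Longrightarrow> t \<in> {0..1} \<Longrightarrow> p t \<in> S \<and> p t \<in> topspace X"
  unfolding dpaths_def using D_img by auto

definition dsq :: "'a set \<Rightarrow> (real \<times> real \<Rightarrow> 'a) \<Rightarrow> bool" where
  "dsq S H \<longleftrightarrow> continuous_map (top_of_set ({0..1} \<times> {0..1})) (subtopology X S) H \<and>
     (\<forall>a b. adm a \<and> adm b \<longrightarrow> (\<lambda>t. H (a t, b t)) \<in> dpaths D S)"

lemma dhtp_iff: "dhtp X D S p q \<longleftrightarrow> (\<exists>H. dsq S H \<and>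
     (\<forall>t\<in>{0..1}. H (t, 0) = p t \<and> H (t, 1) = q t) \<and>
     (\<forall>s\<in>{0..1}. H (0, s) = p 0 \<and> H (1, s) = p 1))"
  unfolding dhtp_def dsq_def adm_def by (simp only: conj_assoc)


lemma sq_mem: "z \<in> {0..1::real} \<times> {0..1::real} \<longleftrightarrow> 0 \<le> fst z \<and> fst z \<le> 1 \<and> 0 \<le> snd z \<and> snd z \<le> 1"
  by (cases z) auto

lemma dsq_reparam:
  assumes p: "p \<in> dpaths D S"
    and c: "continuous_on ({0..1} \<times> {0..1}) \<Phi>"
    and r: "\<And>t s. t \<in> {0..1} \<Longrightarrow> s \<in> {0..1} \<Longrightarrow> \<Phi> (t, s) \<in> {0..1}"
    and m: "\<And>t t' s s'. 0 \<le> t \<Longrightarrow> t \<le> t' \<Longrightarrow> t' \<le> 1 \<Longrightarrow> 0 \<le> s \<Longrightarrow> s \<le> s' \<Longrightarrow> s' \<le> 1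
              \<Longrightarrow> \<Phi> (t, s) \<le> \<Phi> (t', s')"
  shows "dsq S (\<lambda>z. p (\<Phi> z))"
  unfolding dsq_def
proof (intro conjI allI impI)
  have 1: "continuous_map (top_of_set ({0..1} \<times> {0..1})) (top_of_set {0..1}) \<Phi>"
    unfolding continuous_map_subtopology_eu using c r by (auto simp: image_subset_iff sq_mem)
  have 2: "continuous_map (top_of_set {0..1}) (subtopology X S) p"
    using p D_cont unfolding dpaths_def
    by (auto simp: continuous_map_in_subtopology)
  show "continuous_map (top_of_set ({0..1} \<times> {0..1})) (subtopology X S) (\<lambda>z. p (\<Phi> z))"
    using continuous_map_compose[OF 1 2] by (simp add: o_def)
next
  fix a b assume ab: "adm a \<and> adm b"
  have "adm (\<lambda>t. \<Phi> (a t, b t))"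
  proof (rule admI)
    have "continuous_on {0..1} (\<lambda>t. (a t, b t))"
      using ab adm_cont by (auto intro: continuous_intros)
    moreover have "(\<lambda>t. (a t, b t)) ` {0..1} \<subseteq> {0..1} \<times> {0..1}"
    proof
      fix z assume "z \<in> (\<lambda>t. (a t, b t)) ` {0..1}"
      then obtain t where t: "t \<in> {0..1}" "z = (a t, b t)" by blast
      show "z \<in> {0..1} \<times> {0..1}" using adm_range[of a t] adm_range[of b t] ab t by auto
    qed
    ultimately show "continuous_on {0..1} (\<lambda>t. \<Phi> (a t, b t))"
      by (rule continuous_on_compose2[OF c])
    show "\<Phi> (a t, b t) \<in> {0..1}" if "t \<in> {0..1}" for t
      using r[of "a t" "b t"] adm_range[of a t] adm_range[of b t] ab that by auto
    show "\<Phi> (a s, b s) \<le> \<Phi> (a t, b t)" if "0 \<le> s" "s \<le> t" "t \<le> 1" for s t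
    proof (rule m)
      show "0 \<le> a s" "a t \<le> 1" "0 \<le> b s" "b t \<le> 1"
        using adm_range[of a s] adm_range[of b s] adm_range[of a t] adm_range[of b t] ab that by auto
      show "a s \<le> a t" "b s \<le> b t" using adm_mono[of a s t] adm_mono[of b s t] ab that by auto
    qed
  qed
  then show "(\<lambda>t. p (\<Phi> (a t, b t))) \<in> dpaths D S" using dp_reparam[OF p] by blast
qed

lemma dhtp_reparam:
  assumes p: "p \<in> dpaths D S" and a1: "adm \<phi>1" and a2: "adm \<phi>2"
    and le: "\<And>t. t \<in> {0..1} \<Longrightarrow> \<phi>1 t \<le> \<phi>2 t"
    and e0: "\<phi>1 0 = \<phi>2 0" and e1: "\<phi>1 1 = \<phi>2 1"
  shows "dhtp X D S (\<lambda>t. p (\<phi>1 t)) (\<lambda>t. p (\<phi>2 t))"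
  unfolding dhtp_iff
proof (intro exI conjI ballI)
  let ?\<Phi> = "\<lambda>z. (1 - snd z) * \<phi>1 (fst z) + snd z * \<phi>2 (fst z)"
  show "dsq S (\<lambda>z. p (?\<Phi> z))"
  proof (rule dsq_reparam[OF p])
    have "continuous_on ({0..1} \<times> {0..1}) (\<lambda>z. \<phi>1 (fst z))"
      using adm_cont[OF a1] by (rule continuous_on_compose2) (auto intro: continuous_intros)
    moreover have "continuous_on ({0..1} \<times> {0..1}) (\<lambda>z. \<phi>2 (fst z))"
      using adm_cont[OF a2] by (rule continuous_on_compose2) (auto intro: continuous_intros)
    ultimately show "continuous_on ({0..1} \<times> {0..1}) ?\<Phi>"
      by (intro continuous_intros) auto
    show "?\<Phi> (t, s) \<in> {0..1}" if "t \<in> {0..1}" "s \<in> {0..1}" for t s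
    proof -
      have "0 \<le> \<phi>1 t" "\<phi>1 t \<le> 1" "0 \<le> \<phi>2 t" "\<phi>2 t \<le> 1"
        using adm_range[OF a1] adm_range[OF a2] that by auto
      moreover have "0 \<le> s" "s \<le> 1" using that by auto
      ultimately have "0 \<le> (1 - s) * \<phi>1 t + s * \<phi>2 t" by simp
      moreover have "(1 - s) * \<phi>1 t + s * \<phi>2 t \<le> (1 - s) * 1 + s * 1"
        using \<open>\<phi>1 t \<le> 1\<close> \<open>\<phi>2 t \<le> 1\<close> \<open>0 \<le> s\<close> \<open>s \<le> 1\<close>
        by (intro add_mono mult_left_mono) auto
      ultimately show ?thesis by simp
    qed
    show "?\<Phi> (t, s) \<le> ?\<Phi> (t', s')"
      if "0 \<le> t" "t \<le> t'" "t' \<le> 1" "0 \<le> s" "s \<le> s'" "s' \<le> 1" for t t' s s'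
    proof -
      have "\<phi>1 t \<le> \<phi>1 t'" "\<phi>2 t \<le> \<phi>2 t'" using adm_mono a1 a2 that by auto
      hence "(1 - s) * \<phi>1 t + s * \<phi>2 t \<le> (1 - s) * \<phi>1 t' + s * \<phi>2 t'"
        using that by (intro add_mono mult_left_mono) auto
      also have "\<dots> \<le> (1 - s') * \<phi>1 t' + s' * \<phi>2 t'"
      proof -
        have "0 \<le> (s' - s) * (\<phi>2 t' - \<phi>1 t')" using le[of t'] that by auto
        thus ?thesis by (simp add: algebra_simps)
      qed
      finally show ?thesis by simp
    qed
  qed
  show "p (?\<Phi> (t, 0)) = p (\<phi>1 t)" "p (?\<Phi> (t, 1)) = p (\<phi>2 t)" for t by simp_all
  have cvx: "(1 - s) * x + s * x = x" for s x :: real by (simp add: algebra_simps)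
  show "p (?\<Phi> (0, s)) = p (\<phi>1 0)" for s
    using cvx[of s "\<phi>2 0"] by (simp add: e0)
  show "p (?\<Phi> (1, s)) = p (\<phi>1 1)" for s
    using cvx[of s "\<phi>2 1"] by (simp add: e1)
qed

lemma dhtp_agree:
  assumes p: "p \<in> dpaths D S" and q: "\<And>t. t \<in> {0..1} \<Longrightarrow> q t = p t"
  shows "dhtp X D S p q"
proof -
  have "dhtp X D S (\<lambda>t. p ((\<lambda>t. t) t)) (\<lambda>t. p ((\<lambda>t. t) t))"
    by (rule dhtp_reparam[OF p adm_id adm_id]) auto
  then obtain H where H: "dsq S H" "\<forall>t\<in>{0..1}. H (t, 0) = p t \<and> H (t, 1) = p t"
      "\<forall>s\<in>{0..1}. H (0, s) = p 0 \<and> H (1, s) = p 1"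
    unfolding dhtp_iff by auto
  show ?thesis unfolding dhtp_iff using H q by (intro exI[of _ H]) auto
qed

lemma dsq_mono: "dsq S H \<Longrightarrow> S \<subseteq> S' \<Longrightarrow> dsq S' H"
  unfolding dsq_def continuous_map_in_subtopology using dp_mono by blast

lemma dhtp_mono: "dhtp X D S p q \<Longrightarrow> S \<subseteq> S' \<Longrightarrow> dhtp X D S' p q"
  unfolding dhtp_iff using dsq_mono by blast

lemma dhtp_paths:
  assumes "dhtp X D S p q"
  shows "p \<in> dpaths D S \<and> q \<in> dpaths D S \<and> q 0 = p 0 \<and> q 1 = p 1"
proof -
  obtain H where H: "dsq S H" "\<forall>t\<in>{0..1}. H (t, 0) = p t \<and> H (t, 1) = q t"
      "\<forall>s\<in>{0..1}. H (0, s) = p 0 \<and> H (1, s) = p 1"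
    using assms unfolding dhtp_iff by auto
  have "(\<lambda>t. H ((\<lambda>t. t) t, (\<lambda>t. 0) t)) \<in> dpaths D S"
    using H(1) adm_id adm_const[of 0] unfolding dsq_def by auto
  hence "p \<in> dpaths D S" by (rule dp_agree) (use H in auto)
  moreover have "(\<lambda>t. H ((\<lambda>t. t) t, (\<lambda>t. 1) t)) \<in> dpaths D S"
    using H(1) adm_id adm_const[of 1] unfolding dsq_def by auto
  hence "q \<in> dpaths D S" by (rule dp_agree) (use H in auto)
  moreover have "q 0 = p 0" "q 1 = p 1" using H(2,3) by (metis atLeastAtMost_iff order_refl zero_le_one)+
  ultimately show ?thesis by auto
qed

lemma dequiv_sym: "dequiv X D S p q \<Longrightarrow> dequiv X D S q p"
  unfolding dequiv_def
proof (induction rule: rtranclp.induct)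
  case (rtrancl_refl a) then show ?case by simp
next
  case (rtrancl_into_rtrancl a b c)
  then show ?case by (metis (mono_tags, lifting) converse_rtranclp_into_rtranclp)
qed

lemma dequiv_trans: "dequiv X D S p q \<Longrightarrow> dequiv X D S q r \<Longrightarrow> dequiv X D S p r"
  unfolding dequiv_def by (rule rtranclp_trans)

lemma dequiv_refl: "dequiv X D S p p"
  unfolding dequiv_def by simp

lemma dhtp_dequiv: "dhtp X D S p q \<Longrightarrow> dequiv X D S p q"
  unfolding dequiv_def by (rule r_into_rtranclp) simp

lemma dequiv_paths:
  "dequiv X D S p q \<Longrightarrow> p \<in> dpaths D S \<Longrightarrow> q \<in> dpaths D S \<and> q 0 = p 0 \<and> q 1 = p 1"
  unfolding dequiv_def
proof (induction rule: rtranclp.induct)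
  case (rtrancl_into_rtrancl a b c)
  then show ?case using dhtp_paths by metis
qed simp

lemma dequiv_mono: "dequiv X D S p q \<Longrightarrow> S \<subseteq> S' \<Longrightarrow> dequiv X D S' p q"
  unfolding dequiv_def
  by (erule rtranclp_mono[THEN predicate2D, rotated]) (auto intro: dhtp_mono)

lemma dequiv_reparam:
  assumes p: "p \<in> dpaths D S" and a: "adm \<phi>" and e: "\<phi> 0 = 0" "\<phi> 1 = 1"
  shows "dequiv X D S p (\<lambda>t. p (\<phi> t))"
proof -
  let ?\<psi> = "\<lambda>t. max t (\<phi> t)"
  have a2: "adm ?\<psi>"
  proof (rule admI)
    show "continuous_on {0..1} ?\<psi>" using adm_cont[OF a] by (intro continuous_intros)
    show "?\<psi> t \<in> {0..1}" if "t \<in> {0..1}" for t using adm_range[OF a, of t] that by auto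
    show "?\<psi> s \<le> ?\<psi> t" if "0 \<le> s" "s \<le> t" "t \<le> 1" for s t
      using adm_mono[OF a, of s t] that by (intro max.mono) auto
  qed
  have "dhtp X D S (\<lambda>t. p ((\<lambda>t. t) t)) (\<lambda>t. p (?\<psi> t))"
    by (rule dhtp_reparam[OF p adm_id a2]) (use e in auto)
  hence 1: "dequiv X D S p (\<lambda>t. p (?\<psi> t))" using dhtp_dequiv by simp
  have "dhtp X D S (\<lambda>t. p (\<phi> t)) (\<lambda>t. p (?\<psi> t))"
    by (rule dhtp_reparam[OF p a a2]) (use e in auto)
  hence 2: "dequiv X D S (\<lambda>t. p (\<phi> t)) (\<lambda>t. p (?\<psi> t))" by (rule dhtp_dequiv)
  show ?thesis by (rule dequiv_trans[OF 1 dequiv_sym[OF 2]])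
qed

lemma cls_self: "p \<in> dpaths D S \<Longrightarrow> p \<in> dcls X D S p"
  unfolding dcls_def using dequiv_refl by auto

lemma cls_eq: "p \<in> dpaths D S \<Longrightarrow> dequiv X D S p q \<Longrightarrow> dcls X D S q = dcls X D S p"
  unfolding dcls_def using dequiv_trans dequiv_sym by blast

lemma cls_mem: "p \<in> dpaths D S \<Longrightarrow> q \<in> dcls X D S p \<Longrightarrow>
    dequiv X D S p q \<and> q \<in> dpaths D S \<and> q 0 = p 0 \<and> q 1 = p 1"
  unfolding dcls_def using dequiv_paths by blast

lemma hom_uniq: "f \<in> dhom X D S a b \<Longrightarrow> f \<in> dhom X D S a' b' \<Longrightarrow> a = a' \<and> b = b'"
proof -
  assume f1: "f \<in> dhom X D S a b" and f2: "f \<in> dhom X D S a' b'"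
  obtain p where p: "p \<in> dpaths D S" "p 0 = a" "p 1 = b" "f = dcls X D S p"
    using f1 unfolding dhom_def by auto
  obtain q where q: "q \<in> dpaths D S" "q 0 = a'" "q 1 = b'" "f = dcls X D S q"
    using f2 unfolding dhom_def by auto
  have "p \<in> dcls X D S q" using cls_self[OF p(1)] p(4) q(4) by simp
  thus ?thesis using cls_mem[OF q(1)] p q by auto
qed


lemma D_split:
  assumes c: "0 \<le> c" "c \<le> 1"
    and r1: "(\<lambda>u. r (c * u)) \<in> D" and r2: "(\<lambda>u. r (c + u * (1 - c))) \<in> D"
  shows "r \<in> D"
proof (cases "c = 0")
  case True then show ?thesis using r2 by simp
next
  case c0: False
  show ?thesis
  proof (cases "c = 1")
    case True then show ?thesis using r1 by simp
  next
    case c1: False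
    have cc: "0 < c" "c < 1" using c c0 c1 by auto
    let ?r1 = "\<lambda>u. r (c * u)" and ?r2 = "\<lambda>u. r (c + u * (1 - c))"
    let ?\<phi> = "\<lambda>t. if t \<le> c then t / (2 * c) else 1/2 + (t - c) / (2 * (1 - c))"
    have cat: "dconcat ?r1 ?r2 \<in> D" using D_concat[OF r1 r2] by simp
    have a: "adm ?\<phi>"
    proof (rule admI)
      show "continuous_on {0..1} ?\<phi>"
        by (rule continuous_on_cases_le[where h="\<lambda>t. t", unfolded if_distrib])
           (use cc in \<open>auto intro!: continuous_intros\<close>)
      show "?\<phi> t \<in> {0..1}" if "t \<in> {0..1}" for t
        using that cc by (auto simp: field_simps)
      show "?\<phi> s \<le> ?\<phi> t" if "0 \<le> s" "s \<le> t" "t \<le> 1" for s t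
      proof -
        have A: "s / (2 * c) \<le> t / (2 * c)" using that cc by (simp add: divide_right_mono)
        have B: "(s - c) / (2 * (1 - c)) \<le> (t - c) / (2 * (1 - c))" using that cc by (simp add: divide_right_mono)
        have C: "s / (2 * c) \<le> 1/2" if "s \<le> c" using that cc by (simp add: field_simps)
        have E: "0 \<le> (t - c) / (2 * (1 - c))" if "\<not> t \<le> c" using that cc by simp
        show ?thesis
        proof (cases "s \<le> c")
          case sc: True
          show ?thesis
          proof (cases "t \<le> c")
            case True thus ?thesis using A sc by simp
          next
            case False thus ?thesis using C[OF sc] E[OF False] sc by simp
          qed
        next
          case False
          hence "\<not> t \<le> c" using that by auto
          thus ?thesis using B False by simp
        qed
      qed
    qed
    have "(\<lambda>t. dconcat ?r1 ?r2 (?\<phi> t)) \<in> D" by (rule D_reparam[OF cat a])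
    then show ?thesis
    proof (rule D_agree)
      fix t :: real assume t: "t \<in> {0..1}"
      show "r t = dconcat ?r1 ?r2 (?\<phi> t)"
      proof (cases "t \<le> c")
        case True
        have "?\<phi> t \<le> 1/2" using True cc by (simp add: field_simps)
        moreover have "c * (2 * (t / (2 * c))) = t" using cc by (simp add: field_simps)
        ultimately show ?thesis using True by (simp add: dconcat_def)
      next
        case False
        have "\<not> ?\<phi> t \<le> 1/2" using False cc by (simp add: field_simps)
        moreover have "c + (2 * (1/2 + (t - c) / (2 * (1 - c))) - 1) * (1 - c) = t"
          using cc by (simp add: field_simps)
        ultimately show ?thesis using False by (simp add: dconcat_def)
      qed
    qed
  qed
qed

lemma adm_lin: "0 \<le> c \<Longrightarrow> c \<le> 1 \<Longrightarrow> adm (\<lambda>u. c * u)"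
  by (rule admI) (auto intro!: continuous_intros mult_left_mono simp: mult_le_one)

lemma adm_lin2: "0 \<le> c \<Longrightarrow> c \<le> 1 \<Longrightarrow> adm (\<lambda>u. c + u * (1 - c))"
proof (rule admI)
  assume c: "0 \<le> c" "c \<le> 1"
  show "continuous_on {0..1} (\<lambda>u. c + u * (1 - c))" by (intro continuous_intros)
  show "c + t * (1 - c) \<in> {0..1}" if "t \<in> {0..1}" for t
  proof -
    have "t * (1 - c) \<le> 1 * (1 - c)" using that c by (intro mult_right_mono) auto
    thus ?thesis using that c by auto
  qed
  show "c + s * (1 - c) \<le> c + t * (1 - c)" if "0 \<le> s" "s \<le> t" "t \<le> 1" for s t
    using that c by (auto intro: mult_right_mono)
qed

definition paste :: "(real \<times> real \<Rightarrow> 'a) \<Rightarrow> (real \<times> real \<Rightarrow> 'a) \<Rightarrow> real \<times> real \<Rightarrow> 'a" where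
  "paste H1 H2 = (\<lambda>z. if fst z \<le> 1/2 then H1 (min (2 * fst z) 1, snd z) else H2 (max (2 * fst z - 1) 0, snd z))"

lemma dsq_paste:
  assumes H1: "dsq S H1" and H2: "dsq S H2" and E: "\<And>s. s \<in> {0..1} \<Longrightarrow> H1 (1, s) = H2 (0, s)"
  shows "dsq S (paste H1 H2)"
  unfolding dsq_def
proof (intro conjI allI impI)
  let ?sq = "{0..1::real} \<times> {0..1::real}"
  have g1: "continuous_map (top_of_set ?sq) (top_of_set ?sq) (\<lambda>z. (min (2 * fst z) 1, snd z))"
    by (auto simp: continuous_map_subtopology_eu sq_mem intro!: continuous_intros)
  have g2: "continuous_map (top_of_set ?sq) (top_of_set ?sq) (\<lambda>z. (max (2 * fst z - 1) 0, snd z))"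
    by (auto simp: continuous_map_subtopology_eu sq_mem intro!: continuous_intros)
  have c1: "continuous_map (top_of_set ?sq) (subtopology X S) (\<lambda>z. H1 (min (2 * fst z) 1, snd z))"
    using continuous_map_compose[OF g1, of "subtopology X S" H1] H1 unfolding dsq_def by (simp add: o_def)
  have c2: "continuous_map (top_of_set ?sq) (subtopology X S) (\<lambda>z. H2 (max (2 * fst z - 1) 0, snd z))"
    using continuous_map_compose[OF g2, of "subtopology X S" H2] H2 unfolding dsq_def by (simp add: o_def)
  show "continuous_map (top_of_set ?sq) (subtopology X S) (paste H1 H2)"
    unfolding paste_def
  proof (rule continuous_map_cases_le)
    show "continuous_map (top_of_set ?sq) euclideanreal fst"
      by (simp add: continuous_on_fst continuous_on_id)
    show "continuous_map (top_of_set ?sq) euclideanreal (\<lambda>x. 1/2)" by simp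
    show "continuous_map (subtopology (top_of_set ?sq) {x \<in> topspace (top_of_set ?sq). fst x \<le> 1/2})
            (subtopology X S) (\<lambda>z. H1 (min (2 * fst z) 1, snd z))"
      using c1 by (rule continuous_map_from_subtopology)
    show "continuous_map (subtopology (top_of_set ?sq) {x \<in> topspace (top_of_set ?sq). 1/2 \<le> fst x})
            (subtopology X S) (\<lambda>z. H2 (max (2 * fst z - 1) 0, snd z))"
      using c2 by (rule continuous_map_from_subtopology)
    show "H1 (min (2 * fst x) 1, snd x) = H2 (max (2 * fst x - 1) 0, snd x)"
      if "x \<in> topspace (top_of_set ?sq)" "fst x = 1/2" for x
    proof -
      have "min (2 * fst x) 1 = 1" "max (2 * fst x - 1) 0 = 0" using that(2) by auto
      moreover have "snd x \<in> {0..1}" using that(1) by (auto simp: sq_mem)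
      ultimately show ?thesis using E[of "snd x"] by simp
    qed
  qed
next
  fix a b assume ab: "adm a \<and> adm b"
  let ?r = "\<lambda>t. paste H1 H2 (a t, b t)"
  let ?a1 = "\<lambda>t. min (2 * a t) 1" and ?a2 = "\<lambda>t. max (2 * a t - 1) 0"
  have aa1: "adm ?a1"
  proof (rule admI)
    show "continuous_on {0..1} ?a1" using adm_cont ab by (auto intro!: continuous_intros)
    show "?a1 t \<in> {0..1}" if "t \<in> {0..1}" for t using adm_range[of a t] ab that by auto
    show "?a1 s \<le> ?a1 t" if "0 \<le> s" "s \<le> t" "t \<le> 1" for s t
      using adm_mono[of a s t] ab that by auto
  qed
  have aa2: "adm ?a2"
  proof (rule admI)
    show "continuous_on {0..1} ?a2" using adm_cont ab by (auto intro!: continuous_intros)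
    show "?a2 t \<in> {0..1}" if "t \<in> {0..1}" for t using adm_range[of a t] ab that by auto
    show "?a2 s \<le> ?a2 t" if "0 \<le> s" "s \<le> t" "t \<le> 1" for s t
      using adm_mono[of a s t] ab that by auto
  qed
  let ?r1 = "\<lambda>t. H1 (?a1 t, b t)" and ?r2 = "\<lambda>t. H2 (?a2 t, b t)"
  have r1: "?r1 \<in> dpaths D S" using H1 aa1 ab unfolding dsq_def by blast
  have r2: "?r2 \<in> dpaths D S" using H2 aa2 ab unfolding dsq_def by blast
  have rle: "?r t = ?r1 t" if "t \<in> {0..1}" "a t \<le> 1/2" for t
    using that by (simp add: paste_def)
  have rge: "?r t = ?r2 t" if "t \<in> {0..1}" "1/2 \<le> a t" for t
  proof (cases "a t \<le> 1/2")
    case True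
    hence "a t = 1/2" using that by simp
    hence "min (2 * a t) 1 = 1" "max (2 * a t - 1) 0 = 0" by auto
    moreover have "b t \<in> {0..1}" using adm_range[of b t] ab that by auto
    ultimately show ?thesis using E[of "b t"] True by (simp add: paste_def)
  qed (simp add: paste_def)
  have img: "?r t \<in> S" if "t \<in> {0..1}" for t
  proof (cases "a t \<le> 1/2")
    case True
    have e: "?r t = ?r1 t" by (rule rle[OF that True])
    have "?r1 t \<in> S" using dp_pt[OF r1 that] by (rule conjunct1)
    thus ?thesis by (subst e)
  next
    case False
    have e: "?r t = ?r2 t" by (rule rge[OF that]) (use False in simp)
    have "?r2 t \<in> S" using dp_pt[OF r2 that] by (rule conjunct1)
    thus ?thesis by (subst e)
  qed
  have "?r \<in> D"
  proof (cases "a 1 \<le> 1/2")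
    case True
    have "?r1 \<in> D" using r1 unfolding dpaths_def by simp
    thus ?thesis
    proof (rule D_agree)
      fix t :: real assume t: "t \<in> {0..1}"
      have "a t \<le> a 1" using adm_mono[of a t 1] ab t by auto
      thus "?r t = ?r1 t" using rle[OF t] True by simp
    qed
  next
    case n1: False
    show ?thesis
    proof (cases "1/2 \<le> a 0")
      case True
      have "?r2 \<in> D" using r2 unfolding dpaths_def by simp
      thus ?thesis
      proof (rule D_agree)
        fix t :: real assume t: "t \<in> {0..1}"
        have "a 0 \<le> a t" using adm_mono[of a 0 t] ab t by auto
        thus "?r t = ?r2 t" using rge[OF t] True by simp
      qed
    next
      case n0: False
      obtain c where c: "0 \<le> c" "c \<le> 1" "a c = 1/2"
        using IVT'[of a 0 "1/2" 1] n0 n1 adm_cont ab by auto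
      show ?thesis
      proof (rule D_split[OF c(1,2)])
        have "(\<lambda>u. ?r1 (c * u)) \<in> D"
          using D_reparam[OF _ adm_lin[OF c(1,2)], of ?r1] r1 unfolding dpaths_def by simp
        thus "(\<lambda>u. ?r (c * u)) \<in> D"
        proof (rule D_agree)
          fix u :: real assume u: "u \<in> {0..1}"
          have "c * u \<in> {0..1}" using adm_range[OF adm_lin[OF c(1,2)]] u by auto
          moreover have "c * u \<le> c" using u c by (simp add: mult_left_le)
          ultimately have "a (c * u) \<le> 1/2" using adm_mono[of a "c*u" c] ab c by auto
          thus "?r (c * u) = ?r1 (c * u)" using rle \<open>c * u \<in> {0..1}\<close> by blast
        qed
        have "(\<lambda>u. ?r2 (c + u * (1 - c))) \<in> D"
          using D_reparam[OF _ adm_lin2[OF c(1,2)], of ?r2] r2 unfolding dpaths_def by simp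
        thus "(\<lambda>u. ?r (c + u * (1 - c))) \<in> D"
        proof (rule D_agree)
          fix u :: real assume u: "u \<in> {0..1}"
          have cu: "c + u * (1 - c) \<in> {0..1}" using adm_range[OF adm_lin2[OF c(1,2)]] u by auto
          moreover have "c \<le> c + u * (1 - c)" using u c by simp
          ultimately have "1/2 \<le> a (c + u * (1 - c))" using adm_mono[of a c "c + u * (1 - c)"] ab c by auto
          thus "?r (c + u * (1 - c)) = ?r2 (c + u * (1 - c))" using rge cu by blast
        qed
      qed
    qed
  qed
  then show "?r \<in> dpaths D S" using img unfolding dpaths_def by auto
qed


lemma dsq_path: "p \<in> dpaths D S \<Longrightarrow> dsq S (\<lambda>z. p (fst z))"
  by (rule dsq_reparam[of p S fst]) (simp_all add: continuous_on_fst continuous_on_id)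

lemma dhtp_concat_l:
  assumes h: "dhtp X D S p p'" and q: "q \<in> dpaths D S" and e: "p 1 = q 0"
  shows "dhtp X D S (dconcat p q) (dconcat p' q)"
proof -
  obtain H where H: "dsq S H" "\<forall>t\<in>{0..1}. H (t, 0) = p t \<and> H (t, 1) = p' t"
      "\<forall>s\<in>{0..1}. H (0, s) = p 0 \<and> H (1, s) = p 1"
    using h unfolding dhtp_iff by auto
  have K: "dsq S (paste H (\<lambda>z. q (fst z)))"
    by (rule dsq_paste[OF H(1) dsq_path[OF q]]) (use H(3) e in auto)
  show ?thesis unfolding dhtp_iff
  proof (intro exI[of _ "paste H (\<lambda>z. q (fst z))"] conjI ballI K)
    fix t :: real assume t: "t \<in> {0..1}"
    show "paste H (\<lambda>z. q (fst z)) (t, 0) = dconcat p q t"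
    proof (cases "t \<le> 1/2")
      case True
      hence "min (2 * t) 1 = 2 * t" "2 * t \<in> {0..1}" using t by auto
      then show ?thesis using True H(2) by (simp add: paste_def dconcat_def)
    next
      case False
      hence "max (2 * t - 1) 0 = 2 * t - 1" by auto
      then show ?thesis using False by (simp add: paste_def dconcat_def)
    qed
    show "paste H (\<lambda>z. q (fst z)) (t, 1) = dconcat p' q t"
    proof (cases "t \<le> 1/2")
      case True
      hence "min (2 * t) 1 = 2 * t" "2 * t \<in> {0..1}" using t by auto
      then show ?thesis using True H(2) by (simp add: paste_def dconcat_def)
    next
      case False
      hence "max (2 * t - 1) 0 = 2 * t - 1" by auto
      then show ?thesis using False by (simp add: paste_def dconcat_def)
    qed
  next
    fix s :: real assume s: "s \<in> {0..1}"
    show "paste H (\<lambda>z. q (fst z)) (0, s) = dconcat p q 0"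
      using H(3) s by (simp add: paste_def dconcat_def)
    show "paste H (\<lambda>z. q (fst z)) (1, s) = dconcat p q 1"
      by (simp add: paste_def dconcat_def)
  qed
qed

lemma dhtp_concat_r:
  assumes h: "dhtp X D S q q'" and p: "p \<in> dpaths D S" and e: "p 1 = q 0"
  shows "dhtp X D S (dconcat p q) (dconcat p q')"
proof -
  obtain H where H: "dsq S H" "\<forall>t\<in>{0..1}. H (t, 0) = q t \<and> H (t, 1) = q' t"
      "\<forall>s\<in>{0..1}. H (0, s) = q 0 \<and> H (1, s) = q 1"
    using h unfolding dhtp_iff by auto
  have K: "dsq S (paste (\<lambda>z. p (fst z)) H)"
    by (rule dsq_paste[OF dsq_path[OF p] H(1)]) (use H(3) e in auto)
  show ?thesis unfolding dhtp_iff
  proof (intro exI[of _ "paste (\<lambda>z. p (fst z)) H"] conjI ballI K)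
    fix t :: real assume t: "t \<in> {0..1}"
    show "paste (\<lambda>z. p (fst z)) H (t, 0) = dconcat p q t"
    proof (cases "t \<le> 1/2")
      case True
      hence "min (2 * t) 1 = 2 * t" by auto
      then show ?thesis using True by (simp add: paste_def dconcat_def)
    next
      case False
      hence "max (2 * t - 1) 0 = 2 * t - 1" "2 * t - 1 \<in> {0..1}" using t by auto
      then show ?thesis using False H(2) by (simp add: paste_def dconcat_def)
    qed
    show "paste (\<lambda>z. p (fst z)) H (t, 1) = dconcat p q' t"
    proof (cases "t \<le> 1/2")
      case True
      hence "min (2 * t) 1 = 2 * t" by auto
      then show ?thesis using True by (simp add: paste_def dconcat_def)
    next
      case False
      hence "max (2 * t - 1) 0 = 2 * t - 1" "2 * t - 1 \<in> {0..1}" using t by auto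
      then show ?thesis using False H(2) by (simp add: paste_def dconcat_def)
    qed
  next
    fix s :: real assume s: "s \<in> {0..1}"
    show "paste (\<lambda>z. p (fst z)) H (0, s) = dconcat p q 0"
      by (simp add: paste_def dconcat_def)
    show "paste (\<lambda>z. p (fst z)) H (1, s) = dconcat p q 1"
      using H(3) s by (simp add: paste_def dconcat_def)
  qed
qed

lemma dequiv_concat_l:
  assumes "dequiv X D S p p'" "p \<in> dpaths D S" "q \<in> dpaths D S" "p 1 = q 0"
  shows "dequiv X D S (dconcat p q) (dconcat p' q)"
  using assms(1)[unfolded dequiv_def] assms(2-)
proof (induction rule: rtranclp.induct)
  case (rtrancl_refl a) show ?case by (rule dequiv_refl)
next
  case (rtrancl_into_rtrancl a b c)
  have ab: "dequiv X D S a b" using rtrancl_into_rtrancl(1) unfolding dequiv_def .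
  have IH: "dequiv X D S (dconcat a q) (dconcat b q)"
    using rtrancl_into_rtrancl(3-6) by blast
  have b: "b \<in> dpaths D S" "b 1 = q 0"
    using dequiv_paths[OF ab rtrancl_into_rtrancl(4)] rtrancl_into_rtrancl(6) by auto
  have "dhtp X D S b c \<or> dhtp X D S c b" using rtrancl_into_rtrancl(2) by simp
  hence "dequiv X D S (dconcat b q) (dconcat c q)"
  proof
    assume h: "dhtp X D S b c"
    show ?thesis by (rule dhtp_dequiv[OF dhtp_concat_l[OF h rtrancl_into_rtrancl(5) b(2)]])
  next
    assume h: "dhtp X D S c b"
    hence "c 1 = q 0" using dhtp_paths[OF h] b(2) by simp
    show ?thesis by (rule dequiv_sym[OF dhtp_dequiv[OF dhtp_concat_l[OF h rtrancl_into_rtrancl(5) \<open>c 1 = q 0\<close>]]])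
  qed
  then show ?case by (rule dequiv_trans[OF IH])
qed

lemma dequiv_concat_r:
  assumes "dequiv X D S q q'" "q \<in> dpaths D S" "p \<in> dpaths D S" "p 1 = q 0"
  shows "dequiv X D S (dconcat p q) (dconcat p q')"
  using assms(1)[unfolded dequiv_def] assms(2-)
proof (induction rule: rtranclp.induct)
  case (rtrancl_refl a) show ?case by (rule dequiv_refl)
next
  case (rtrancl_into_rtrancl a b c)
  have ab: "dequiv X D S a b" using rtrancl_into_rtrancl(1) unfolding dequiv_def .
  have IH: "dequiv X D S (dconcat p a) (dconcat p b)"
    using rtrancl_into_rtrancl(3-6) by blast
  have b: "b \<in> dpaths D S" "p 1 = b 0"
    using dequiv_paths[OF ab rtrancl_into_rtrancl(4)] rtrancl_into_rtrancl(6) by auto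
  have "dhtp X D S b c \<or> dhtp X D S c b" using rtrancl_into_rtrancl(2) by simp
  hence "dequiv X D S (dconcat p b) (dconcat p c)"
  proof
    assume h: "dhtp X D S b c"
    show ?thesis by (rule dhtp_dequiv[OF dhtp_concat_r[OF h rtrancl_into_rtrancl(5) b(2)]])
  next
    assume h: "dhtp X D S c b"
    hence "p 1 = c 0" using dhtp_paths[OF h] b(2) by simp
    show ?thesis by (rule dequiv_sym[OF dhtp_dequiv[OF dhtp_concat_r[OF h rtrancl_into_rtrancl(5) \<open>p 1 = c 0\<close>]]])
  qed
  then show ?case by (rule dequiv_trans[OF IH])
qed

lemma dequiv_concat:
  assumes "dequiv X D S p p'" "dequiv X D S q q'" "p \<in> dpaths D S" "q \<in> dpaths D S" "p 1 = q 0"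
  shows "dequiv X D S (dconcat p q) (dconcat p' q')"
proof -
  have p': "p' \<in> dpaths D S" "p' 1 = p 1" using dequiv_paths assms by blast+
  have 1: "dequiv X D S (dconcat p q) (dconcat p' q)" by (rule dequiv_concat_l[OF assms(1,3,4,5)])
  have 2: "dequiv X D S (dconcat p' q) (dconcat p' q')"
    by (rule dequiv_concat_r[OF assms(2,4) p'(1)]) (simp add: p'(2) assms(5))
  show ?thesis by (rule dequiv_trans[OF 1 2])
qed

lemma dcomp_cls:
  assumes p: "p \<in> dpaths D S" and q: "q \<in> dpaths D S" and e: "p 1 = q 0"
  shows "dcomp X D S (dcls X D S q) (dcls X D S p) = dcls X D S (dconcat p q)"
proof -
  let ?p = "SOME x. x \<in> dcls X D S p" and ?q = "SOME x. x \<in> dcls X D S q"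
  have s1: "?p \<in> dcls X D S p" by (rule someI[of "\<lambda>x. x \<in> dcls X D S p" p]) (rule cls_self[OF p])
  have 1: "dequiv X D S p ?p" using cls_mem[OF p s1] by (rule conjunct1)
  have s2: "?q \<in> dcls X D S q" by (rule someI[of "\<lambda>x. x \<in> dcls X D S q" q]) (rule cls_self[OF q])
  have 2: "dequiv X D S q ?q" using cls_mem[OF q s2] by (rule conjunct1)
  have "dequiv X D S (dconcat p q) (dconcat ?p ?q)" by (rule dequiv_concat[OF 1 2 p q e])
  thus ?thesis unfolding dcomp_def by (rule cls_eq[OF dp_concat[OF p q e]])
qed

lemma dhomE:
  assumes "f \<in> dhom X D S a b"
  obtains p where "p \<in> dpaths D S" "p 0 = a" "p 1 = b" "f = dcls X D S p"
  using assms unfolding dhom_def by auto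

lemma dhomI: "p \<in> dpaths D S \<Longrightarrow> dcls X D S p \<in> dhom X D S (p 0) (p 1)"
  unfolding dhom_def by auto

lemma cat_hom:
  assumes f: "f \<in> dhom X D S a b" and g: "g \<in> dhom X D S b c"
  shows "dcomp X D S g f \<in> dhom X D S a c"
proof -
  obtain p where p: "p \<in> dpaths D S" "p 0 = a" "p 1 = b" "f = dcls X D S p" using f by (rule dhomE)
  obtain q where q: "q \<in> dpaths D S" "q 0 = b" "q 1 = c" "g = dcls X D S q" using g by (rule dhomE)
  have "dcomp X D S g f = dcls X D S (dconcat p q)" using dcomp_cls p q by simp
  moreover have "dconcat p q \<in> dpaths D S" using dp_concat p q by simp
  moreover have "dconcat p q 0 = a" "dconcat p q 1 = c" using p q by (simp_all add: dconcat_def)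
  ultimately show ?thesis using dhomI[of "dconcat p q" S] by simp
qed

lemma cat_assoc:
  assumes f: "f \<in> dhom X D S a b" and g: "g \<in> dhom X D S b c" and h: "h \<in> dhom X D S c d"
  shows "dcomp X D S h (dcomp X D S g f) = dcomp X D S (dcomp X D S h g) f"
proof -
  obtain p where p: "p \<in> dpaths D S" "p 0 = a" "p 1 = b" "f = dcls X D S p" using f by (rule dhomE)
  obtain q where q: "q \<in> dpaths D S" "q 0 = b" "q 1 = c" "g = dcls X D S q" using g by (rule dhomE)
  obtain r where r: "r \<in> dpaths D S" "r 0 = c" "r 1 = d" "h = dcls X D S r" using h by (rule dhomE)
  have pq: "dconcat p q \<in> dpaths D S" "dconcat p q 1 = r 0" using dp_concat p q r by (auto simp: dconcat_def)
  have qr: "dconcat q r \<in> dpaths D S" "p 1 = dconcat q r 0" using dp_concat p q r by (auto simp: dconcat_def)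
  have L: "dcomp X D S h (dcomp X D S g f) = dcls X D S (dconcat (dconcat p q) r)"
    using dcomp_cls p q r pq by simp
  have R: "dcomp X D S (dcomp X D S h g) f = dcls X D S (dconcat p (dconcat q r))"
    using dcomp_cls p q r qr by simp
  let ?\<phi> = "\<lambda>t::real. min (2 * t) (min (t + 1/4) (t / 2 + 1/2))"
  have a: "adm ?\<phi>"
  proof (rule admI)
    show "continuous_on {0..1} ?\<phi>" by (intro continuous_intros) auto
    show "?\<phi> t \<in> {0..1}" if "t \<in> {0..1}" for t using that by auto
    show "?\<phi> s \<le> ?\<phi> t" if "0 \<le> s" "s \<le> t" "t \<le> 1" for s t using that by auto
  qed
  have eq: "dconcat (dconcat p q) r = (\<lambda>t. dconcat p (dconcat q r) (?\<phi> t))"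
  proof
    fix t :: real
    show "dconcat (dconcat p q) r t = dconcat p (dconcat q r) (?\<phi> t)"
      by (cases "t \<le> 1/4"; cases "t \<le> 1/2") (auto simp: dconcat_def min_def algebra_simps)
  qed
  have "dequiv X D S (dconcat p (dconcat q r)) (dconcat (dconcat p q) r)"
    unfolding eq by (rule dequiv_reparam[OF dp_concat[OF p(1) qr(1) qr(2)] a]) auto
  thus ?thesis using L R cls_eq dp_concat[OF p(1) qr(1) qr(2)] by simp
qed

lemma did_hom: "a \<in> topspace X \<Longrightarrow> a \<in> S \<Longrightarrow> did X D S a \<in> dhom X D S a a"
  unfolding did_def using dhomI[OF dp_const, of a S] by simp

lemma cat_idl:
  assumes f: "f \<in> dhom X D S a b"
  shows "dcomp X D S (did X D S b) f = f"
proof -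
  obtain p where p: "p \<in> dpaths D S" "p 0 = a" "p 1 = b" "f = dcls X D S p" using f by (rule dhomE)
  have c: "(\<lambda>t. b) \<in> dpaths D S" using dp_const dp_pt[OF p(1), of 1] p by auto
  have L: "dcomp X D S (did X D S b) f = dcls X D S (dconcat p (\<lambda>t. b))"
    unfolding did_def using dcomp_cls[OF p(1) c] p by simp
  have eq: "dconcat p (\<lambda>t. b) = (\<lambda>t. p (min (2 * t) 1))"
    using p by (auto simp: dconcat_def min_def)
  have a: "adm (\<lambda>t. min (2 * t) 1)" by (rule admI) (auto intro!: continuous_intros)
  have "dequiv X D S p (dconcat p (\<lambda>t. b))" unfolding eq by (rule dequiv_reparam[OF p(1) a]) auto
  thus ?thesis using L p cls_eq by simp
qed

lemma cat_idr:
  assumes f: "f \<in> dhom X D S a b"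
  shows "dcomp X D S f (did X D S a) = f"
proof -
  obtain p where p: "p \<in> dpaths D S" "p 0 = a" "p 1 = b" "f = dcls X D S p" using f by (rule dhomE)
  have c: "(\<lambda>t. a) \<in> dpaths D S" using dp_const dp_pt[OF p(1), of 0] p by auto
  have L: "dcomp X D S f (did X D S a) = dcls X D S (dconcat (\<lambda>t. a) p)"
    unfolding did_def using dcomp_cls[OF c p(1)] p by simp
  have eq: "dconcat (\<lambda>t. a) p = (\<lambda>t. p (max (2 * t - 1) 0))"
    using p by (auto simp: dconcat_def max_def)
  have a: "adm (\<lambda>t. max (2 * t - 1) 0)" by (rule admI) (auto intro!: continuous_intros)
  have "dequiv X D S p (dconcat (\<lambda>t. a) p)" unfolding eq by (rule dequiv_reparam[OF p(1) a]) auto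
  thus ?thesis using L p cls_eq by simp
qed

lemma dincl_cls:
  assumes p: "p \<in> dpaths D S" and S: "S \<subseteq> S'"
  shows "dincl X D S' (dcls X D S p) = dcls X D S' p"
proof -
  have p': "p \<in> dpaths D S'" using dp_mono p S by blast
  show ?thesis unfolding dincl_def
  proof (intro set_eqI iffI)
    fix q assume "q \<in> {q \<in> dpaths D S'. \<exists>p'\<in>dcls X D S p. dequiv X D S' p' q}"
    then obtain p' where q: "q \<in> dpaths D S'" "p' \<in> dcls X D S p" "dequiv X D S' p' q" by auto
    have "dequiv X D S' p p'" using cls_mem[OF p q(2)] dequiv_mono S by blast
    thus "q \<in> dcls X D S' p" using q dequiv_trans unfolding dcls_def by blast
  next
    fix q assume "q \<in> dcls X D S' p"
    thus "q \<in> {q \<in> dpaths D S'. \<exists>p'\<in>dcls X D S p. dequiv X D S' p' q}"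
      using cls_self[OF p] unfolding dcls_def by auto
  qed
qed

lemma dincl_hom: assumes "f \<in> dhom X D S a b" "S \<subseteq> S'" shows "dincl X D S' f \<in> dhom X D S' a b"
proof -
  obtain p where p: "p \<in> dpaths D S" "p 0 = a" "p 1 = b" "f = dcls X D S p" using assms(1) by (rule dhomE)
  have "dincl X D S' f = dcls X D S' p" using dincl_cls[OF p(1) assms(2)] p(4) by simp
  thus ?thesis using dhomI[OF dp_mono[OF p(1) assms(2)]] p by simp
qed

lemma dincl_dincl: assumes "f \<in> dhom X D S a b" "S \<subseteq> S'" "S' \<subseteq> S''"
  shows "dincl X D S'' (dincl X D S' f) = dincl X D S'' f"
proof -
  obtain p where p: "p \<in> dpaths D S" "p 0 = a" "p 1 = b" "f = dcls X D S p" using assms(1) by (rule dhomE)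
  have 1: "dincl X D S' f = dcls X D S' p" using dincl_cls[OF p(1) assms(2)] p(4) by simp
  have 2: "dincl X D S'' (dcls X D S' p) = dcls X D S'' p"
    using dincl_cls[OF dp_mono[OF p(1) assms(2)] assms(3)] .
  have 3: "dincl X D S'' f = dcls X D S'' p"
    using dincl_cls[OF p(1)] assms(2,3) p(4) by (metis order_trans)
  show ?thesis using 1 2 3 by simp
qed

lemma dincl_comp:
  assumes f: "f \<in> dhom X D S a b" and g: "g \<in> dhom X D S b c" and S: "S \<subseteq> S'"
  shows "dincl X D S' (dcomp X D S g f) = dcomp X D S' (dincl X D S' g) (dincl X D S' f)"
proof -
  obtain p where p: "p \<in> dpaths D S" "p 0 = a" "p 1 = b" "f = dcls X D S p" using f by (rule dhomE)
  obtain q where q: "q \<in> dpaths D S" "q 0 = b" "q 1 = c" "g = dcls X D S q" using g by (rule dhomE)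
  have "dcomp X D S g f = dcls X D S (dconcat p q)" using dcomp_cls p q by simp
  moreover have "dconcat p q \<in> dpaths D S" using dp_concat p q by simp
  ultimately show ?thesis
    using dincl_cls[OF _ S] dcomp_cls dp_mono[OF _ S] p q by simp
qed

lemma dincl_did: "a \<in> topspace X \<Longrightarrow> a \<in> S \<Longrightarrow> S \<subseteq> S' \<Longrightarrow> dincl X D S' (did X D S a) = did X D S' a"
  unfolding did_def by (rule dincl_cls[OF dp_const])

end

locale FR = DS +
  fixes S B A :: "'a set" and Fo :: "'a \<Rightarrow> 'a" and Fm and \<eta> :: "'a \<Rightarrow> (real \<Rightarrow> 'a) set"
  assumes fr: "future_retract X D S B A Fo Fm \<eta>"
    and AB: "A \<subseteq> B" and BS: "B \<subseteq> S" and ST: "S \<subseteq> topspace X"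
begin

lemma frD:
  "dfunctor X D S B S A Fo Fm"
  "\<forall>x\<in>B. \<eta> x \<in> dhom X D S x (Fo x)"
  "\<forall>x\<in>B. \<forall>y\<in>B. \<forall>f\<in>dhom X D S x y. dcomp X D S (Fm f) (\<eta> x) = dcomp X D S (\<eta> y) f"
  "\<forall>x\<in>B. \<forall>a\<in>A. \<forall>f\<in>dhom X D S x a. \<exists>!g. g \<in> dhom X D S (Fo x) a \<and> dcomp X D S g (\<eta> x) = f"
  "\<forall>a\<in>A. \<eta> a = did X D S a"
  using fr unfolding future_retract_def left_adjoint_incl_def by simp_all

lemma dfD:
  "\<forall>a\<in>B. Fo a \<in> A"
  "\<forall>a\<in>B. \<forall>b\<in>B. \<forall>f\<in>dhom X D S a b. Fm f \<in> dhom X D S (Fo a) (Fo b)"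
  "\<forall>a\<in>B. \<forall>b\<in>B. \<forall>c\<in>B. \<forall>f\<in>dhom X D S a b. \<forall>g\<in>dhom X D S b c.
        Fm (dcomp X D S g f) = dcomp X D S (Fm g) (Fm f)"
  using frD(1) unfolding dfunctor_def by simp_all

lemma fr_obj: "x \<in> B \<Longrightarrow> Fo x \<in> A"
  by (rule dfD(1)[rule_format])

lemma fr_hom: "x \<in> B \<Longrightarrow> y \<in> B \<Longrightarrow> f \<in> dhom X D S x y \<Longrightarrow> Fm f \<in> dhom X D S (Fo x) (Fo y)"
  by (rule dfD(2)[rule_format])

lemma fr_comp: "x \<in> B \<Longrightarrow> y \<in> B \<Longrightarrow> z \<in> B \<Longrightarrow> f \<in> dhom X D S x y \<Longrightarrow> g \<in> dhom X D S y z \<Longrightarrow>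
    Fm (dcomp X D S g f) = dcomp X D S (Fm g) (Fm f)"
  by (rule dfD(3)[rule_format])

lemma fr_eta: "x \<in> B \<Longrightarrow> \<eta> x \<in> dhom X D S x (Fo x)"
  by (rule frD(2)[rule_format])

lemma fr_nat: "x \<in> B \<Longrightarrow> y \<in> B \<Longrightarrow> f \<in> dhom X D S x y \<Longrightarrow>
    dcomp X D S (Fm f) (\<eta> x) = dcomp X D S (\<eta> y) f"
  by (rule frD(3)[rule_format])

lemma fr_univ: "x \<in> B \<Longrightarrow> a \<in> A \<Longrightarrow> f \<in> dhom X D S x a \<Longrightarrow>
    \<exists>!g. g \<in> dhom X D S (Fo x) a \<and> dcomp X D S g (\<eta> x) = f"
  by (rule frD(4)[rule_format])

lemma fr_id: "a \<in> A \<Longrightarrow> \<eta> a = did X D S a"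
  by (rule frD(5)[rule_format])

lemma fr_fix: "a \<in> A \<Longrightarrow> Fo a = a"
proof -
  assume a: "a \<in> A"
  have "\<eta> a \<in> dhom X D S a (Fo a)" using fr_eta a AB by blast
  moreover have "a \<in> S" "a \<in> topspace X" using a AB BS ST by auto
  hence "did X D S a \<in> dhom X D S a a" by (intro did_hom)
  hence "\<eta> a \<in> dhom X D S a a" using fr_id[OF a] by simp
  ultimately show ?thesis using hom_uniq by metis
qed

lemma fr_tri: assumes x: "x \<in> B" shows "Fm (\<eta> x) = did X D S (Fo x)"
proof -
  have fx: "Fo x \<in> A" using fr_obj x .
  have fxB: "Fo x \<in> B" using fx AB by auto
  have fxT: "Fo x \<in> topspace X" "Fo x \<in> S" using fxB BS ST by auto
  have e: "\<eta> x \<in> dhom X D S x (Fo x)" using fr_eta x .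
  have U: "\<exists>!g. g \<in> dhom X D S (Fo x) (Fo x) \<and> dcomp X D S g (\<eta> x) = \<eta> x"
    using fr_univ[OF x fx e] .
  have g1: "Fm (\<eta> x) \<in> dhom X D S (Fo x) (Fo x)"
    using fr_hom[OF x fxB e] fr_fix[OF fx] by simp
  have "dcomp X D S (Fm (\<eta> x)) (\<eta> x) = dcomp X D S (\<eta> (Fo x)) (\<eta> x)"
    using fr_nat[OF x fxB e] .
  also have "\<dots> = \<eta> x" using fr_id[OF fx] cat_idl[OF e] by simp
  finally have g1e: "dcomp X D S (Fm (\<eta> x)) (\<eta> x) = \<eta> x" .
  have g2: "did X D S (Fo x) \<in> dhom X D S (Fo x) (Fo x)" using fxT by (intro did_hom)
  have g2e: "dcomp X D S (did X D S (Fo x)) (\<eta> x) = \<eta> x" using cat_idl[OF e] .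
  show ?thesis using U g1 g1e g2 g2e by blast
qed

end

lemma inc_pos: "(\<forall>i<N. (t::nat \<Rightarrow> real) i < t (Suc i)) \<Longrightarrow> 0 < m \<Longrightarrow> m \<le> N \<Longrightarrow> t 0 < t m"
proof (induction m)
  case 0 then show ?case by simp
next
  case (Suc m)
  show ?case
  proof (cases "m = 0")
    case True then show ?thesis using Suc.prems by auto
  next
    case False
    hence "t 0 < t m" using Suc by auto
    moreover have "t m < t (Suc m)" using Suc.prems by auto
    ultimately show ?thesis by simp
  qed
qed

theorem mainTheorem10:
  fixes X :: "'a topology" and D :: "(real \<Rightarrow> 'a) set"
    and Xk Ak Bk :: "nat \<Rightarrow> 'a set" and A B :: "'a set"
    and Qo Po :: "nat \<Rightarrow> 'a \<Rightarrow> 'a"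
    and Qm Pm :: "nat \<Rightarrow> (real \<Rightarrow> 'a) set \<Rightarrow> (real \<Rightarrow> 'a) set"
    and \<theta> \<eta> :: "nat \<Rightarrow> 'a \<Rightarrow> (real \<Rightarrow> 'a) set"
    and PPo :: "'a \<Rightarrow> 'a" and PPm :: "(real \<Rightarrow> 'a) set \<Rightarrow> (real \<Rightarrow> 'a) set"
  assumes dsp: "dspace X D"
    and Xsub: "Xk 1 \<subseteq> topspace X" "Xk 2 \<subseteq> topspace X"
    and Xcov: "topspace X = (X interior_of Xk 1) \<union> (X interior_of Xk 2)"
    and Dgen: "\<forall>p. p \<in> D \<longleftrightarrow> (\<exists>(n::nat) (t::nat \<Rightarrow> real). n > 0 \<and> t 0 = 0 \<and> t n = 1 \<and>
                 (\<forall>i<n. t i < t (Suc i)) \<and>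
                 (\<forall>i<n. (\<lambda>s. p (t i + s * (t (Suc i) - t i))) \<in> dpaths D (Xk 1) \<union> dpaths D (Xk 2)))"
    and X0: "Xk 0 = Xk 1 \<inter> Xk 2"
    and ABsub: "\<forall>k\<in>{0,1,2}. Ak k \<subseteq> Bk k \<and> Bk k \<subseteq> Xk k"
    and A0: "Ak 0 = Ak 1 \<inter> Ak 2" and B0: "Bk 0 = Bk 1 \<inter> Bk 2"
    and Adef: "A = Ak 1 \<union> Ak 2" and Bdef: "B = Bk 1 \<union> Bk 2"
    and Acov: "A = (subtopology X A interior_of Ak 1) \<union> (subtopology X A interior_of Ak 2)"
    and Bcov: "B = (subtopology X B interior_of Bk 1) \<union> (subtopology X B interior_of Bk 2)"
    \<comment> \<open>compatible future retracts Q_k : pi1(X_k) \<rightarrow> pi1(X_k,B_k) with units \<theta>_k\<close>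
    and Qfr: "\<forall>k\<in>{0,1,2}. future_retract X D (Xk k) (Xk k) (Bk k) (Qo k) (Qm k) (\<theta> k)"
    and Qcomp: "\<forall>k\<in>{1,2}.
        (\<forall>x\<in>Xk 0. Qo k x = Qo 0 x) \<and>
        (\<forall>x\<in>Xk 0. \<forall>y\<in>Xk 0. \<forall>f\<in>dhom X D (Xk 0) x y.
            Qm k (dincl X D (Xk k) f) = dincl X D (Xk k) (Qm 0 f)) \<and>
        (\<forall>x\<in>Xk 0. dincl X D (Xk k) (\<theta> 0 x) = \<theta> k x)"
    \<comment> \<open>compatible future retracts P_k : pi1(X_k,B_k) \<rightarrow> pi1(X_k,A_k) with units \<eta>_k\<close>
    and Pfr: "\<forall>k\<in>{0,1,2}. future_retract X D (Xk k) (Bk k) (Ak k) (Po k) (Pm k) (\<eta> k)"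
    and Pcomp: "\<forall>k\<in>{1,2}.
        (\<forall>x\<in>Bk 0. Po k x = Po 0 x) \<and>
        (\<forall>x\<in>Bk 0. \<forall>y\<in>Bk 0. \<forall>f\<in>dhom X D (Xk 0) x y.
            Pm k (dincl X D (Xk k) f) = dincl X D (Xk k) (Pm 0 f)) \<and>
        (\<forall>x\<in>Bk 0. dincl X D (Xk k) (\<eta> 0 x) = \<eta> k x)"
    \<comment> \<open>P : pi1(X,B) \<rightarrow> pi1(X,A) a functor with P o j_k = j'_k o P_k\<close>
    and Pfun: "dfunctor X D (topspace X) B (topspace X) A PPo PPm"
    and Pglue: "\<forall>k\<in>{1,2}.
        (\<forall>x\<in>Bk k. PPo x = Po k x) \<and>
        (\<forall>x\<in>Bk k. \<forall>y\<in>Bk k. \<forall>f\<in>dhom X D (Xk k) x y.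
            PPm (dincl X D (topspace X) f) = dincl X D (topspace X) (Pm k f))"
  shows "let \<eta>P = (\<lambda>x. dincl X D (topspace X) (\<eta> (if x \<in> Bk 1 then 1 else 2) x)) in
           (\<forall>k\<in>{1,2}. \<forall>x\<in>Bk k. \<eta>P x = dincl X D (topspace X) (\<eta> k x)) \<and>
           left_adjoint_incl X D (topspace X) B A PPo PPm \<eta>P \<and>
           (\<forall>a\<in>A. adj_counit X D (topspace X) PPo \<eta>P a = did X D (topspace X) a) \<and>
           future_retract X D (topspace X) B A PPo PPm \<eta>P"
proof -
  interpret DS X D by (rule DS.intro[OF dsp])
  let ?T = "topspace X"
  have X01: "Xk 0 \<subseteq> Xk 1" and X02: "Xk 0 \<subseteq> Xk 2" using X0 by auto
  have XTk: "Xk k \<subseteq> ?T" if "k \<in> {0,1,2}" for k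
    using that Xsub X0 by auto
  have XT1: "Xk 1 \<subseteq> ?T" and XT2: "Xk 2 \<subseteq> ?T" using Xsub by auto
  have T12: "?T = Xk 1 \<union> Xk 2"
    using Xcov interior_of_subset[of X "Xk 1"] interior_of_subset[of X "Xk 2"] Xsub by blast
  have ABk: "Ak k \<subseteq> Bk k" "Bk k \<subseteq> Xk k" if "k \<in> {0,1,2}" for k
    using ABsub that by auto
  have PF: "FR X D (Xk k) (Bk k) (Ak k) (Po k) (Pm k) (\<eta> k)" if "k \<in> {0,1,2}" for k
  proof (intro FR.intro FR_axioms.intro)
    show "DS X D" by (rule DS.intro[OF dsp])
    show "future_retract X D (Xk k) (Bk k) (Ak k) (Po k) (Pm k) (\<eta> k)" using Pfr that by blast
  qed (use ABk[OF that] XTk[OF that] in auto)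
  have QF: "FR X D (Xk k) (Xk k) (Bk k) (Qo k) (Qm k) (\<theta> k)" if "k \<in> {0,1,2}" for k
  proof (intro FR.intro FR_axioms.intro)
    show "DS X D" by (rule DS.intro[OF dsp])
    show "future_retract X D (Xk k) (Xk k) (Bk k) (Qo k) (Qm k) (\<theta> k)" using Qfr that by blast
  qed (use ABk[OF that] XTk[OF that] in auto)
  have k0: "(0::nat) \<in> {0,1,2}" and k1: "(1::nat) \<in> {0,1,2}" and k2: "(2::nat) \<in> {0,1,2}" by auto
  have k12: "k \<in> {0,1,2}" if "k \<in> {1,2}" for k :: nat using that by auto
  have B01: "Bk 0 \<subseteq> Bk 1" and B02: "Bk 0 \<subseteq> Bk 2" using B0 by auto
  have BkB: "Bk k \<subseteq> B" if "k \<in> {1,2}" for k using that Bdef by auto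
  have AkA: "Ak k \<subseteq> A" if "k \<in> {1,2}" for k using that Adef by auto
  have BT: "B \<subseteq> ?T" using Bdef ABk[OF k1] ABk[OF k2] XT1 XT2 by auto
  have AB: "A \<subseteq> B" using Adef Bdef ABk[OF k1] ABk[OF k2] by auto
  have inB: "\<exists>k\<in>{1,2}. x \<in> Bk k" if "x \<in> B" for x using that Bdef by auto
  have inA: "\<exists>k\<in>{1,2}. x \<in> Ak k" if "x \<in> A" for x using that Adef by auto
  have Pc3: "dincl X D (Xk k) (\<eta> 0 x) = \<eta> k x" if "k \<in> {1,2}" "x \<in> Bk 0" for k x
    using Pcomp that by blast
  have Qc1: "Qo k x = Qo 0 x" if "k \<in> {1,2}" "x \<in> Xk 0" for k x
    using Qcomp that by blast
  have Qc3: "dincl X D (Xk k) (\<theta> 0 x) = \<theta> k x" if "k \<in> {1,2}" "x \<in> Xk 0" for k x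
    using Qcomp that by blast
  have Pg1: "PPo x = Po k x" if "k \<in> {1,2}" "x \<in> Bk k" for k x
    using Pglue that by blast
  have Pg2: "PPm (dincl X D ?T f) = dincl X D ?T (Pm k f)"
    if "k \<in> {1,2}" "x \<in> Bk k" "y \<in> Bk k" "f \<in> dhom X D (Xk k) x y" for k x y f
    using Pglue that by blast
  have PF_obj: "PPo x \<in> A" if "x \<in> B" for x
  proof -
    have "\<forall>a\<in>B. PPo a \<in> A" using Pfun unfolding dfunctor_def by simp
    thus ?thesis using that by blast
  qed
  have PF_hom: "PPm f \<in> dhom X D ?T (PPo x) (PPo y)" if "x \<in> B" "y \<in> B" "f \<in> dhom X D ?T x y" for x y f
  proof -
    have "\<forall>a\<in>B. \<forall>b\<in>B. \<forall>f\<in>dhom X D ?T a b. PPm f \<in> dhom X D ?T (PPo a) (PPo b)"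
      using Pfun unfolding dfunctor_def by simp
    thus ?thesis using that by blast
  qed
  have PF_comp: "PPm (dcomp X D ?T g f) = dcomp X D ?T (PPm g) (PPm f)"
    if "x \<in> B" "y \<in> B" "z \<in> B" "f \<in> dhom X D ?T x y" "g \<in> dhom X D ?T y z" for x y z f g
  proof -
    have "\<forall>a\<in>B. \<forall>b\<in>B. \<forall>c\<in>B. \<forall>f\<in>dhom X D ?T a b. \<forall>g\<in>dhom X D ?T b c.
        PPm (dcomp X D ?T g f) = dcomp X D ?T (PPm g) (PPm f)"
      using Pfun unfolding dfunctor_def by simp
    thus ?thesis using that by blast
  qed
  define \<eta>P where "\<eta>P = (\<lambda>x. dincl X D ?T (\<eta> (if x \<in> Bk 1 then 1 else 2) x))"
  have E1: "\<eta>P x = dincl X D ?T (\<eta> k x)" if "k \<in> {1,2}" "x \<in> Bk k" for k x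
  proof (cases "x \<in> Bk 1")
    case xb1: True
    show ?thesis
    proof (cases "k = 1")
      case True thus ?thesis using xb1 unfolding \<eta>P_def by simp
    next
      case False
      hence kk: "k = 2" using that by auto
      have x0: "x \<in> Bk 0" using xb1 that(2) kk B0 by auto
      have e0: "\<eta> 0 x \<in> dhom X D (Xk 0) x (Po 0 x)" using FR.fr_eta[OF PF[OF k0] x0] .
      have "dincl X D ?T (\<eta> 1 x) = dincl X D ?T (\<eta> 0 x)"
        using Pc3[of 1 x] x0 dincl_dincl[OF e0 X01 XT1] by simp
      moreover have "dincl X D ?T (\<eta> 2 x) = dincl X D ?T (\<eta> 0 x)"
        using Pc3[of 2 x] x0 dincl_dincl[OF e0 X02 XT2] by simp
      ultimately show ?thesis using xb1 kk unfolding \<eta>P_def by simp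
    qed
  next
    case False
    hence "k = 2" using that by auto
    thus ?thesis using False unfolding \<eta>P_def by simp
  qed
  have E2: "\<eta>P x \<in> dhom X D ?T x (PPo x)" if "x \<in> B" for x
  proof -
    note th = that
    obtain k where k: "k \<in> {1,2}" "x \<in> Bk k" using inB[OF th] by blast
    have "\<eta> k x \<in> dhom X D (Xk k) x (Po k x)" using FR.fr_eta[OF PF[OF k12[OF k(1)]] k(2)] .
    hence "dincl X D ?T (\<eta> k x) \<in> dhom X D ?T x (Po k x)" using dincl_hom XTk[OF k12[OF k(1)]] by blast
    thus ?thesis using E1[OF k] Pg1[OF k] by simp
  qed
  have E3: "\<eta>P a = did X D ?T a \<and> PPo a = a" if "a \<in> A" for a
  proof -
    note th = that
    obtain k where k: "k \<in> {1,2}" "a \<in> Ak k" using inA[OF th] by blast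
    have kk: "k \<in> {0,1,2}" using k12[OF k(1)] .
    have ab: "a \<in> Bk k" using k ABk[OF kk] by auto
    have ax: "a \<in> Xk k" "a \<in> ?T" using ab ABk[OF kk] XTk[OF kk] by auto
    have "\<eta> k a = did X D (Xk k) a" using FR.fr_id[OF PF[OF kk] k(2)] .
    hence "\<eta>P a = did X D ?T a" using E1[OF k(1) ab] dincl_did[OF ax(2) ax(1) XTk[OF kk]] by simp
    moreover have "PPo a = a" using Pg1[OF k(1) ab] FR.fr_fix[OF PF[OF kk] k(2)] by simp
    ultimately show ?thesis by simp
  qed
  have Ptri: "PPm (\<eta>P x) = did X D ?T (PPo x)" if "x \<in> B" for x
  proof -
    note th = that
    obtain k where k: "k \<in> {1,2}" "x \<in> Bk k" using inB[OF th] by blast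
    have kk: "k \<in> {0,1,2}" using k12[OF k(1)] .
    have e: "\<eta> k x \<in> dhom X D (Xk k) x (Po k x)" using FR.fr_eta[OF PF[OF kk] k(2)] .
    have pa: "Po k x \<in> Ak k" using FR.fr_obj[OF PF[OF kk] k(2)] .
    have pb: "Po k x \<in> Bk k" "Po k x \<in> Xk k" "Po k x \<in> ?T" using pa ABk[OF kk] XTk[OF kk] by auto
    have "PPm (\<eta>P x) = dincl X D ?T (Pm k (\<eta> k x))"
      using E1[OF k] Pg2[OF k(1) k(2) pb(1) e] by simp
    also have "\<dots> = dincl X D ?T (did X D (Xk k) (Po k x))"
      using FR.fr_tri[OF PF[OF kk] k(2)] by simp
    also have "\<dots> = did X D ?T (Po k x)" using dincl_did[OF pb(3) pb(2) XTk[OF kk]] .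
    finally show ?thesis using Pg1[OF k] by simp
  qed
  have Nloc: "dcomp X D ?T (PPm (dincl X D ?T g)) (\<eta>P b) = dcomp X D ?T (\<eta>P b') (dincl X D ?T g)"
    if "k \<in> {1,2}" "b \<in> Bk k" "b' \<in> Bk k" "g \<in> dhom X D (Xk k) b b'" for k b b' g
  proof -
    have kk: "k \<in> {0,1,2}" using k12[OF that(1)] .
    have eb: "\<eta> k b \<in> dhom X D (Xk k) b (Po k b)" using FR.fr_eta[OF PF[OF kk] that(2)] .
    have eb': "\<eta> k b' \<in> dhom X D (Xk k) b' (Po k b')" using FR.fr_eta[OF PF[OF kk] that(3)] .
    have pg: "Pm k g \<in> dhom X D (Xk k) (Po k b) (Po k b')"
      using FR.fr_hom[OF PF[OF kk] that(2,3,4)] .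
    have "dcomp X D ?T (PPm (dincl X D ?T g)) (\<eta>P b)
        = dcomp X D ?T (dincl X D ?T (Pm k g)) (dincl X D ?T (\<eta> k b))"
      using Pg2[OF that] E1[OF that(1,2)] by simp
    also have "\<dots> = dincl X D ?T (dcomp X D (Xk k) (Pm k g) (\<eta> k b))"
      using dincl_comp[OF eb pg XTk[OF kk]] by simp
    also have "\<dots> = dincl X D ?T (dcomp X D (Xk k) (\<eta> k b') g)"
      using FR.fr_nat[OF PF[OF kk] that(2,3,4)] by simp
    also have "\<dots> = dcomp X D ?T (dincl X D ?T (\<eta> k b')) (dincl X D ?T g)"
      using dincl_comp[OF that(4) eb' XTk[OF kk]] .
    also have "\<dots> = dcomp X D ?T (\<eta>P b') (dincl X D ?T g)" using E1[OF that(1,3)] by simp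
    finally show ?thesis .
  qed
  define natP where "natP = (\<lambda>G u v. G \<in> dhom X D ?T u v \<and> u \<in> B \<and> v \<in> B \<and>
      dcomp X D ?T (PPm G) (\<eta>P u) = dcomp X D ?T (\<eta>P v) G)"
  have natP_comp: "natP (dcomp X D ?T h' h) u w" if "natP h u v" "natP h' v w" for h h' u v w
  proof -
    have h: "h \<in> dhom X D ?T u v" "u \<in> B" "v \<in> B"
        "dcomp X D ?T (PPm h) (\<eta>P u) = dcomp X D ?T (\<eta>P v) h"
      using that(1) unfolding natP_def by auto
    have h': "h' \<in> dhom X D ?T v w" "w \<in> B"
        "dcomp X D ?T (PPm h') (\<eta>P v) = dcomp X D ?T (\<eta>P w) h'"
      using that(2) unfolding natP_def by auto
    have Ph: "PPm h \<in> dhom X D ?T (PPo u) (PPo v)" using PF_hom[OF h(2,3,1)] .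
    have Ph': "PPm h' \<in> dhom X D ?T (PPo v) (PPo w)" using PF_hom[OF h(3) h'(2) h'(1)] .
    have eu: "\<eta>P u \<in> dhom X D ?T u (PPo u)" using E2[OF h(2)] .
    have ev: "\<eta>P v \<in> dhom X D ?T v (PPo v)" using E2[OF h(3)] .
    have ew: "\<eta>P w \<in> dhom X D ?T w (PPo w)" using E2[OF h'(2)] .
    have "dcomp X D ?T (PPm (dcomp X D ?T h' h)) (\<eta>P u)
        = dcomp X D ?T (dcomp X D ?T (PPm h') (PPm h)) (\<eta>P u)"
      using PF_comp[OF h(2,3) h'(2) h(1) h'(1)] by simp
    also have "\<dots> = dcomp X D ?T (PPm h') (dcomp X D ?T (PPm h) (\<eta>P u))"
      using cat_assoc[OF eu Ph Ph'] by simp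
    also have "\<dots> = dcomp X D ?T (PPm h') (dcomp X D ?T (\<eta>P v) h)" using h(4) by simp
    also have "\<dots> = dcomp X D ?T (dcomp X D ?T (PPm h') (\<eta>P v)) h"
      using cat_assoc[OF h(1) ev Ph'] .
    also have "\<dots> = dcomp X D ?T (dcomp X D ?T (\<eta>P w) h') h" using h'(3) by simp
    also have "\<dots> = dcomp X D ?T (\<eta>P w) (dcomp X D ?T h' h)"
      using cat_assoc[OF h(1) h'(1) ew] by simp
    finally show ?thesis unfolding natP_def using cat_hom[OF h(1) h'(1)] h(2) h'(2) by simp
  qed
  define Qp where "Qp = (\<lambda>z. Qo (if z \<in> Xk 1 then 1 else 2) z)"
  define \<Theta> where "\<Theta> = (\<lambda>z. dincl X D ?T (\<theta> (if z \<in> Xk 1 then 1 else 2) z))"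
  have Qsel: "Qp z = Qo j z \<and> \<Theta> z = dincl X D ?T (\<theta> j z)" if "j \<in> {1,2}" "z \<in> Xk j" for j z
  proof (cases "z \<in> Xk 1")
    case z1: True
    show ?thesis
    proof (cases "j = 1")
      case True thus ?thesis using z1 unfolding Qp_def \<Theta>_def by simp
    next
      case False
      hence jj: "j = 2" using that by auto
      have z0: "z \<in> Xk 0" using z1 that(2) jj X0 by auto
      have e0: "\<theta> 0 z \<in> dhom X D (Xk 0) z (Qo 0 z)" using FR.fr_eta[OF QF[OF k0] z0] .
      have "dincl X D ?T (\<theta> 1 z) = dincl X D ?T (\<theta> 0 z)"
        using Qc3[of 1 z] z0 dincl_dincl[OF e0 X01 XT1] by simp
      moreover have "dincl X D ?T (\<theta> 2 z) = dincl X D ?T (\<theta> 0 z)"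
        using Qc3[of 2 z] z0 dincl_dincl[OF e0 X02 XT2] by simp
      moreover have "Qo 1 z = Qo 2 z" using Qc1[of 1 z] Qc1[of 2 z] z0 by simp
      ultimately show ?thesis using z1 jj unfolding Qp_def \<Theta>_def by simp
    qed
  next
    case False
    hence "j = 2" using that by auto
    thus ?thesis using False unfolding Qp_def \<Theta>_def by simp
  qed
  have ThB: "\<Theta> z = did X D ?T z \<and> Qp z = z" if "z \<in> B" for z
  proof -
    note th = that
    obtain j where j: "j \<in> {1,2}" "z \<in> Bk j" using inB[OF th] by blast
    have jj: "j \<in> {0,1,2}" using k12[OF j(1)] .
    have zx: "z \<in> Xk j" "z \<in> ?T" using j(2) ABk[OF jj] XTk[OF jj] by auto
    have "\<theta> j z = did X D (Xk j) z" using FR.fr_id[OF QF[OF jj] j(2)] .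
    moreover have "Qo j z = z" using FR.fr_fix[OF QF[OF jj] j(2)] .
    ultimately show ?thesis using Qsel[OF j(1) zx(1)] dincl_did[OF zx(2) zx(1) XTk[OF jj]] by simp
  qed
  have Thom: "\<Theta> z \<in> dhom X D ?T z (Qp z) \<and> Qp z \<in> B" if "z \<in> ?T" for z
  proof -
    note th = that
    obtain j where j: "j \<in> {1,2}" "z \<in> Xk j" using th T12 by auto
    have jj: "j \<in> {0,1,2}" using k12[OF j(1)] .
    have "\<theta> j z \<in> dhom X D (Xk j) z (Qo j z)" using FR.fr_eta[OF QF[OF jj] j(2)] .
    hence "dincl X D ?T (\<theta> j z) \<in> dhom X D ?T z (Qo j z)" using dincl_hom XTk[OF jj] by blast
    moreover have "Qo j z \<in> Bk j" using FR.fr_obj[OF QF[OF jj] j(2)] .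
    ultimately show ?thesis using Qsel[OF j] BkB[OF j(1)] by auto
  qed
  have piece: "\<exists>G. natP G (Qp (q 0)) (Qp (q 1)) \<and>
      dcomp X D ?T (\<Theta> (q 1)) (dcls X D ?T q) = dcomp X D ?T G (\<Theta> (q 0))"
    if "j \<in> {1,2}" "q \<in> dpaths D (Xk j)" for j q
  proof -
    have jj: "j \<in> {0,1,2}" using k12[OF that(1)] .
    have uv: "q 0 \<in> Xk j" "q 1 \<in> Xk j" using dp_pt[OF that(2), of 0] dp_pt[OF that(2), of 1] by auto
    let ?f = "dcls X D (Xk j) q"
    have f: "?f \<in> dhom X D (Xk j) (q 0) (q 1)" using dhomI[OF that(2)] .
    have tu: "\<theta> j (q 0) \<in> dhom X D (Xk j) (q 0) (Qo j (q 0))" using FR.fr_eta[OF QF[OF jj] uv(1)] .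
    have tv: "\<theta> j (q 1) \<in> dhom X D (Xk j) (q 1) (Qo j (q 1))" using FR.fr_eta[OF QF[OF jj] uv(2)] .
    have bu: "Qo j (q 0) \<in> Bk j" using FR.fr_obj[OF QF[OF jj] uv(1)] .
    have bv: "Qo j (q 1) \<in> Bk j" using FR.fr_obj[OF QF[OF jj] uv(2)] .
    have g: "Qm j ?f \<in> dhom X D (Xk j) (Qo j (q 0)) (Qo j (q 1))" using FR.fr_hom[OF QF[OF jj] uv f] .
    have nat: "dcomp X D (Xk j) (Qm j ?f) (\<theta> j (q 0)) = dcomp X D (Xk j) (\<theta> j (q 1)) ?f"
      using FR.fr_nat[OF QF[OF jj] uv f] .
    let ?G = "dincl X D ?T (Qm j ?f)"
    have G: "?G \<in> dhom X D ?T (Qo j (q 0)) (Qo j (q 1))" using dincl_hom[OF g XTk[OF jj]] .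
    have "natP ?G (Qp (q 0)) (Qp (q 1))"
      unfolding natP_def using Qsel[OF that(1) uv(1)] Qsel[OF that(1) uv(2)] G
        BkB[OF that(1)] bu bv Nloc[OF that(1) bu bv g] by auto
    moreover have "dcomp X D ?T (\<Theta> (q 1)) (dcls X D ?T q) = dcomp X D ?T ?G (\<Theta> (q 0))"
    proof -
      have "dcomp X D ?T (\<Theta> (q 1)) (dcls X D ?T q)
          = dcomp X D ?T (dincl X D ?T (\<theta> j (q 1))) (dincl X D ?T ?f)"
        using Qsel[OF that(1) uv(2)] dincl_cls[OF that(2) XTk[OF jj]] by simp
      also have "\<dots> = dincl X D ?T (dcomp X D (Xk j) (\<theta> j (q 1)) ?f)"
        using dincl_comp[OF f tv XTk[OF jj]] by simp
      also have "\<dots> = dincl X D ?T (dcomp X D (Xk j) (Qm j ?f) (\<theta> j (q 0)))" using nat by simp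
      also have "\<dots> = dcomp X D ?T ?G (dincl X D ?T (\<theta> j (q 0)))"
        using dincl_comp[OF tu g XTk[OF jj]] .
      also have "\<dots> = dcomp X D ?T ?G (\<Theta> (q 0))" using Qsel[OF that(1) uv(1)] by simp
      finally show ?thesis .
    qed
    ultimately show ?thesis by blast
  qed
  have chain: "\<forall>p t. 0 < n \<longrightarrow> t 0 = 0 \<longrightarrow> t n = 1 \<longrightarrow> (\<forall>i<n. t i < t (Suc i)) \<longrightarrow>
      (\<forall>i<n. (\<lambda>s. p (t i + s * (t (Suc i) - t i))) \<in> dpaths D (Xk 1) \<union> dpaths D (Xk 2)) \<longrightarrow>
      p \<in> D \<longrightarrow> (\<exists>G. natP G (Qp (p 0)) (Qp (p 1)) \<and>
        dcomp X D ?T (\<Theta> (p 1)) (dcls X D ?T p) = dcomp X D ?T G (\<Theta> (p 0)))" for n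
  proof (induction n)
    case 0 show ?case by simp
  next
    case (Suc n)
    show ?case
    proof (intro allI impI)
      fix p and t :: "nat \<Rightarrow> real"
      assume h1: "0 < Suc n" and h2: "t 0 = 0" and h3: "t (Suc n) = 1"
        and h4: "\<forall>i<Suc n. t i < t (Suc i)"
        and h5: "\<forall>i<Suc n. (\<lambda>s. p (t i + s * (t (Suc i) - t i))) \<in> dpaths D (Xk 1) \<union> dpaths D (Xk 2)"
        and h6: "p \<in> D"
      have pc: "q \<in> dpaths D (Xk 1) \<union> dpaths D (Xk 2) \<Longrightarrow> \<exists>j\<in>{1,2}. q \<in> dpaths D (Xk j)" for q
        by auto
      show "\<exists>G. natP G (Qp (p 0)) (Qp (p 1)) \<and>
          dcomp X D ?T (\<Theta> (p 1)) (dcls X D ?T p) = dcomp X D ?T G (\<Theta> (p 0))"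
      proof (cases "n = 0")
        case True
        have "(\<lambda>s. p (t 0 + s * (t (Suc 0) - t 0))) = p" using h2 h3 True by simp
        moreover have "(\<lambda>s. p (t 0 + s * (t (Suc 0) - t 0))) \<in> dpaths D (Xk 1) \<union> dpaths D (Xk 2)"
          using h5 by simp
        ultimately have "p \<in> dpaths D (Xk 1) \<union> dpaths D (Xk 2)" by simp
        then obtain j where "j \<in> {1,2}" "p \<in> dpaths D (Xk j)" using pc by blast
        thus ?thesis using piece by blast
      next
        case False
        define c where "c = t n"
        have c0: "0 < c" unfolding c_def using inc_pos[of "Suc n" t n] h4 h2 False by simp
        have c1: "c < 1" unfolding c_def using h4 h3 by (metis lessI)
        define p' where "p' = (\<lambda>u. p (c * u))"
        define l where "l = (\<lambda>u. p (c + u * (1 - c)))"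
        define t' where "t' = (\<lambda>i. t i / c)"
        have pT: "p \<in> dpaths D ?T" using h6 D_img unfolding dpaths_def by auto
        have p'D: "p' \<in> D" unfolding p'_def using D_reparam[OF h6 adm_lin] c0 c1 by simp
        have lD: "l \<in> D" unfolding l_def using D_reparam[OF h6 adm_lin2] c0 c1 by simp
        have p'T: "p' \<in> dpaths D ?T" using p'D D_img unfolding dpaths_def by auto
        have lT: "l \<in> dpaths D ?T" using lD D_img unfolding dpaths_def by auto
        have ev: "p' 0 = p 0" "p' 1 = p c" "l 0 = p c" "l 1 = p 1"
          unfolding p'_def l_def by simp_all
        have IHr: "\<exists>G. natP G (Qp (p' 0)) (Qp (p' 1)) \<and>
            dcomp X D ?T (\<Theta> (p' 1)) (dcls X D ?T p') = dcomp X D ?T G (\<Theta> (p' 0))"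
        proof (rule Suc.IH[rule_format])
          show "0 < n" using False by simp
          show "t' 0 = 0" unfolding t'_def using h2 by simp
          show "t' n = 1" unfolding t'_def c_def using c0 c_def by simp
          show "t' i < t' (Suc i)" if "i < n" for i unfolding t'_def using h4 c0 that
            by (auto intro: divide_strict_right_mono)
          show "(\<lambda>s. p' (t' i + s * (t' (Suc i) - t' i))) \<in> dpaths D (Xk 1) \<union> dpaths D (Xk 2)"
            if i: "i < n" for i
          proof -
            have "(\<lambda>s. p' (t' i + s * (t' (Suc i) - t' i))) = (\<lambda>s. p (t i + s * (t (Suc i) - t i)))"
            proof
              fix s
              have "c * (t i / c + s * (t (Suc i) / c - t i / c)) = t i + s * (t (Suc i) - t i)"
                using c0 by (simp add: field_simps)
              thus "p' (t' i + s * (t' (Suc i) - t' i)) = p (t i + s * (t (Suc i) - t i))"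
                unfolding p'_def t'_def by simp
            qed
            thus ?thesis using h5 i by simp
          qed
          show "p' \<in> D" by (rule p'D)
        qed
        then obtain G' where G': "natP G' (Qp (p 0)) (Qp (p c))"
          "dcomp X D ?T (\<Theta> (p c)) (dcls X D ?T p') = dcomp X D ?T G' (\<Theta> (p 0))"
          using ev by auto
        have "(\<lambda>s. p (t n + s * (t (Suc n) - t n))) \<in> dpaths D (Xk 1) \<union> dpaths D (Xk 2)"
          using h5 by simp
        hence "l \<in> dpaths D (Xk 1) \<union> dpaths D (Xk 2)" unfolding l_def c_def using h3 by simp
        then obtain j where j: "j \<in> {1,2}" "l \<in> dpaths D (Xk j)" using pc by blast
        obtain Gl where Gl: "natP Gl (Qp (p c)) (Qp (p 1))"
          "dcomp X D ?T (\<Theta> (p 1)) (dcls X D ?T l) = dcomp X D ?T Gl (\<Theta> (p c))"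
          using piece[OF j] ev by auto
        define \<psi> where "\<psi> = (\<lambda>u::real. c * min (2 * u) 1 + (1 - c) * max (2 * u - 1) 0)"
        have a\<psi>: "adm \<psi>"
        proof (rule admI)
          show "continuous_on {0..1} \<psi>" unfolding \<psi>_def by (intro continuous_intros)
          show "\<psi> u \<in> {0..1}" if "u \<in> {0..1}" for u
          proof -
            have m1: "0 \<le> min (2 * u) 1" "min (2 * u) 1 \<le> 1" using that by auto
            have m2: "0 \<le> max (2 * u - 1) 0" "max (2 * u - 1) 0 \<le> 1" using that by auto
            have "c * min (2 * u) 1 \<le> c * 1" using m1 c0 by (intro mult_left_mono) auto
            moreover have "(1 - c) * max (2 * u - 1) 0 \<le> (1 - c) * 1" using m2 c1 by (intro mult_left_mono) auto
            moreover have "0 \<le> c * min (2 * u) 1" using m1 c0 by simp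
            moreover have "0 \<le> (1 - c) * max (2 * u - 1) 0" using m2 c1 by simp
            ultimately show ?thesis unfolding \<psi>_def by simp
          qed
          show "\<psi> s \<le> \<psi> u" if "0 \<le> s" "s \<le> u" "u \<le> 1" for s u
          proof -
            have "c * min (2 * s) 1 \<le> c * min (2 * u) 1" using that c0 by (intro mult_left_mono) auto
            moreover have "(1 - c) * max (2 * s - 1) 0 \<le> (1 - c) * max (2 * u - 1) 0"
              using that c1 by (intro mult_left_mono) auto
            ultimately show ?thesis unfolding \<psi>_def by simp
          qed
        qed
        have cat: "dconcat p' l = (\<lambda>u. p (\<psi> u))"
        proof
          fix u :: real
          show "dconcat p' l u = p (\<psi> u)"
          proof (cases "u \<le> 1/2")
            case True
            hence "min (2 * u) 1 = 2 * u" "max (2 * u - 1) 0 = 0" by auto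
            thus ?thesis using True unfolding dconcat_def p'_def \<psi>_def by simp
          next
            case False
            hence "min (2 * u) 1 = 1" "max (2 * u - 1) 0 = 2 * u - 1" by auto
            thus ?thesis using False unfolding dconcat_def l_def \<psi>_def by (simp add: algebra_simps)
          qed
        qed
        have "dequiv X D ?T p (\<lambda>u. p (\<psi> u))"
          by (rule dequiv_reparam[OF pT a\<psi>]) (simp_all add: \<psi>_def)
        hence clsp: "dcls X D ?T p = dcomp X D ?T (dcls X D ?T l) (dcls X D ?T p')"
          using dcomp_cls[OF p'T lT] ev cat cls_eq[OF pT] by simp
        have z: "p 0 \<in> ?T" "p c \<in> ?T" "p 1 \<in> ?T" using D_img[OF h6] c0 c1 by auto
        have fp': "dcls X D ?T p' \<in> dhom X D ?T (p 0) (p c)" using dhomI[OF p'T] ev by simp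
        have fl: "dcls X D ?T l \<in> dhom X D ?T (p c) (p 1)" using dhomI[OF lT] ev by simp
        have Th0: "\<Theta> (p 0) \<in> dhom X D ?T (p 0) (Qp (p 0))" using Thom[OF z(1)] by simp
        have Thc: "\<Theta> (p c) \<in> dhom X D ?T (p c) (Qp (p c))" using Thom[OF z(2)] by simp
        have Th1: "\<Theta> (p 1) \<in> dhom X D ?T (p 1) (Qp (p 1))" using Thom[OF z(3)] by simp
        have G'h: "G' \<in> dhom X D ?T (Qp (p 0)) (Qp (p c))" using G'(1) unfolding natP_def by simp
        have Glh: "Gl \<in> dhom X D ?T (Qp (p c)) (Qp (p 1))" using Gl(1) unfolding natP_def by simp
        have "dcomp X D ?T (\<Theta> (p 1)) (dcls X D ?T p)
            = dcomp X D ?T (\<Theta> (p 1)) (dcomp X D ?T (dcls X D ?T l) (dcls X D ?T p'))"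
          using clsp by simp
        also have "\<dots> = dcomp X D ?T (dcomp X D ?T (\<Theta> (p 1)) (dcls X D ?T l)) (dcls X D ?T p')"
          using cat_assoc[OF fp' fl Th1] .
        also have "\<dots> = dcomp X D ?T (dcomp X D ?T Gl (\<Theta> (p c))) (dcls X D ?T p')"
          using Gl(2) by simp
        also have "\<dots> = dcomp X D ?T Gl (dcomp X D ?T (\<Theta> (p c)) (dcls X D ?T p'))"
          using cat_assoc[OF fp' Thc Glh] by simp
        also have "\<dots> = dcomp X D ?T Gl (dcomp X D ?T G' (\<Theta> (p 0)))" using G'(2) by simp
        also have "\<dots> = dcomp X D ?T (dcomp X D ?T Gl G') (\<Theta> (p 0))"
          using cat_assoc[OF Th0 G'h Glh] .
        finally show ?thesis using natP_comp[OF G'(1) Gl(1)] by blast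
      qed
    qed
  qed
  have Nglob: "natP f x y" if xy: "x \<in> B" "y \<in> B" "f \<in> dhom X D ?T x y" for x y f
  proof -
    obtain p where p: "p \<in> dpaths D ?T" "p 0 = x" "p 1 = y" "f = dcls X D ?T p"
      using xy(3) by (rule dhomE)
    have pD: "p \<in> D" using p(1) unfolding dpaths_def by simp
    obtain n t where nt: "n > 0" "t 0 = 0" "t n = 1" "\<forall>i<n. t i < t (Suc i)"
        "\<forall>i<n. (\<lambda>s. p (t i + s * (t (Suc i) - t i))) \<in> dpaths D (Xk 1) \<union> dpaths D (Xk 2)"
      using iffD1[OF spec[OF Dgen, of p] pD] by blast
    obtain G where G: "natP G (Qp (p 0)) (Qp (p 1))"
        "dcomp X D ?T (\<Theta> (p 1)) (dcls X D ?T p) = dcomp X D ?T G (\<Theta> (p 0))"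
      using chain[rule_format, OF nt(1-3) nt(4)[rule_format] nt(5)[rule_format] pD] by blast
    have tx: "\<Theta> x = did X D ?T x" "Qp x = x" using ThB[OF xy(1)] by auto
    have ty: "\<Theta> y = did X D ?T y" "Qp y = y" using ThB[OF xy(2)] by auto
    have Gh: "G \<in> dhom X D ?T x y" using G(1) tx ty p unfolding natP_def by simp
    have "f = G" using G(2) p(2,3,4)[symmetric] tx ty cat_idl[OF xy(3)] cat_idr[OF Gh] by simp
    thus ?thesis using G(1) tx ty p by simp
  qed
  have Univ: "\<exists>!g. g \<in> dhom X D ?T (PPo x) a \<and> dcomp X D ?T g (\<eta>P x) = f"
    if "x \<in> B" "a \<in> A" "f \<in> dhom X D ?T x a" for x a f
  proof (rule ex1I[of _ "PPm f"])
    have aB: "a \<in> B" using that(2) AB by auto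
    have ea: "\<eta>P a = did X D ?T a" "PPo a = a" using E3[OF that(2)] by auto
    show "PPm f \<in> dhom X D ?T (PPo x) a \<and> dcomp X D ?T (PPm f) (\<eta>P x) = f"
    proof
      show "PPm f \<in> dhom X D ?T (PPo x) a" using PF_hom[OF that(1) aB that(3)] ea by simp
      have "dcomp X D ?T (PPm f) (\<eta>P x) = dcomp X D ?T (\<eta>P a) f"
        using Nglob[OF that(1) aB that(3)] unfolding natP_def by simp
      thus "dcomp X D ?T (PPm f) (\<eta>P x) = f" using ea cat_idl[OF that(3)] by simp
    qed
  next
    fix g assume g: "g \<in> dhom X D ?T (PPo x) a \<and> dcomp X D ?T g (\<eta>P x) = f"
    have aB: "a \<in> B" using that(2) AB by auto
    have ea: "\<eta>P a = did X D ?T a" "PPo a = a" using E3[OF that(2)] by auto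
    have pxA: "PPo x \<in> A" using PF_obj[OF that(1)] .
    have pxB: "PPo x \<in> B" using pxA AB by auto
    have epx: "\<eta>P (PPo x) = did X D ?T (PPo x)" "PPo (PPo x) = PPo x" using E3[OF pxA] by auto
    have ex: "\<eta>P x \<in> dhom X D ?T x (PPo x)" using E2[OF that(1)] .
    have gh: "g \<in> dhom X D ?T (PPo x) a" using g by simp
    have Pg: "PPm g \<in> dhom X D ?T (PPo x) a" using PF_hom[OF pxB aB gh] epx ea by simp
    have "dcomp X D ?T (PPm g) (\<eta>P (PPo x)) = dcomp X D ?T (\<eta>P a) g"
      using Nglob[OF pxB aB gh] unfolding natP_def by simp
    hence PPg: "PPm g = g" using epx ea cat_idr[OF Pg] cat_idl[OF gh] by simp
    have "PPm f = PPm (dcomp X D ?T g (\<eta>P x))" using g by simp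
    also have "\<dots> = dcomp X D ?T (PPm g) (PPm (\<eta>P x))" using PF_comp[OF that(1) pxB aB ex gh] .
    also have "\<dots> = dcomp X D ?T g (did X D ?T (PPo x))" using PPg Ptri[OF that(1)] by simp
    also have "\<dots> = g" using cat_idr[OF gh] .
    finally show "g = PPm f" by simp
  qed
  have LA: "left_adjoint_incl X D ?T B A PPo PPm \<eta>P"
    unfolding left_adjoint_incl_def
  proof (intro conjI ballI)
    show "dfunctor X D ?T B ?T A PPo PPm" by (rule Pfun)
    show "\<eta>P x \<in> dhom X D ?T x (PPo x)" if "x \<in> B" for x using E2[OF that] .
    show "dcomp X D ?T (PPm f) (\<eta>P x) = dcomp X D ?T (\<eta>P y) f"
      if "x \<in> B" "y \<in> B" "f \<in> dhom X D ?T x y" for x y f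
      using Nglob[OF that] unfolding natP_def by simp
    show "\<exists>!g. g \<in> dhom X D ?T (PPo x) a \<and> dcomp X D ?T g (\<eta>P x) = f"
      if "x \<in> B" "a \<in> A" "f \<in> dhom X D ?T x a" for x a f using Univ[OF that] .
  qed
  have FRR: "future_retract X D ?T B A PPo PPm \<eta>P"
    unfolding future_retract_def using LA E3 by blast
  have CU: "adj_counit X D ?T PPo \<eta>P a = did X D ?T a" if "a \<in> A" for a
  proof -
    have aB: "a \<in> B" using that AB by auto
    have ea: "\<eta>P a = did X D ?T a" "PPo a = a" using E3[OF that] by auto
    have aT: "a \<in> ?T" using aB BT by auto
    have dh: "did X D ?T a \<in> dhom X D ?T a a" using did_hom[OF aT aT] .
    have U: "\<exists>!g. g \<in> dhom X D ?T (PPo a) a \<and> dcomp X D ?T g (\<eta>P a) = did X D ?T a"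
      using Univ[OF aB that dh] .
    have "did X D ?T a \<in> dhom X D ?T (PPo a) a \<and> dcomp X D ?T (did X D ?T a) (\<eta>P a) = did X D ?T a"
      using dh ea cat_idl[OF dh] by simp
    thus ?thesis unfolding adj_counit_def using the1_equality[OF U] by blast
  qed
  show ?thesis
    unfolding Let_def \<eta>P_def[symmetric]
    using E1 LA CU FRR by blast
qed

end
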